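(* Let $n\geq 2$ be an integer and let $G_\mathbb{R}^+(2,n)$ be the Grassmannian of oriented $2$-planes in $\mathbb{R}^n$, equipped with the natural action of a maximal torus $T$ of $\mathrm{SO}_n$. Then the orbit space $G_\mathbb{R}^+(2,n)/T$ is homeomorphic to the topological join \[S^{\lfloor n/2 \rfloor-1} \ast \mathbb{P}_\mathbb{C}^{\lceil n/2 \rceil-2}.\]
   Context: $G_\mathbb{R}^+(2,n)=\{(v_1,v_2)\in\mathbb{R}^{n\times 2}\mid \langle v_i,v_j\rangle=\delta_{ij}\}/\mathrm{SO}_2$, where $\mathrm{SO}_2$ acts by right multiplication; $\mathrm{SO}_n$ acts by $A\cdot(v_1,v_2)=(Av_1,Av_2)$. A maximal torus $T\cong (S^1)^{\lfloor n/2\rfloor}$ of $\mathrm{SO}_n$ is given by the block-diagonal matrices $\mathrm{diag}(Q_{\phi_1},\dots,Q_{\phi_k})$ for $n=2k$ and $\mathrm{diag}(Q_{\phi_1},\dots,Q_{\phi_k},1)$ for $n=2k+1$, where $Q_\phi=\begin{pmatrix}\cos\phi&-\sin\phi\\ \sin\phi&\cos\phi\end{pmatrix}$. The join $A\ast B$ is $(A\times B\times[0,1])/\sim$ with $(a,b,0)\sim(a',b,0)$ and $(a,b,1)\sim(a,b',1)$; by convention $\mathbb{P}^{-1}_\mathbb{C}=\emptyset$ and $A\ast\emptyset=A$. *)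

theory Defs
  imports "HOL-Analysis.Analysis"
begin

definition qrel :: "'a topology \<Rightarrow> ('a \<Rightarrow> 'a \<Rightarrow> bool) \<Rightarrow> ('a \<times> 'a) set" where
  "qrel X R = {(x, y). x \<in> topspace X \<and> y \<in> topspace X \<and> R x y}"

text \<open>The quotient space of X by the relation R (assumed to be an equivalence
  relation on the points of X): the points are the equivalence classes, and a set of
  classes is open iff its union is open in X.\<close>
definition quotient_top :: "'a topology \<Rightarrow> ('a \<Rightarrow> 'a \<Rightarrow> bool) \<Rightarrow> 'a set topology" where
  "quotient_top X R =
     topology (\<lambda>U. U \<subseteq> topspace X // qrel X R \<and> openin X (\<Union>U))"

lemma istopology_quotient_top:
  assumes "equiv (topspace X) (qrel X R)"
  shows "istopology (\<lambda>U. U \<subseteq> topspace X // qrel X R \<and> openin X (\<Union>U))"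
  unfolding istopology_def
proof (rule conjI; intro allI impI)
  fix S T assume S: "S \<subseteq> topspace X // qrel X R \<and> openin X (\<Union>S)"
    and T: "T \<subseteq> topspace X // qrel X R \<and> openin X (\<Union>T)"
  have "\<Union>(S \<inter> T) = \<Union>S \<inter> \<Union>T"
  proof
    show "\<Union>S \<inter> \<Union>T \<subseteq> \<Union>(S \<inter> T)"
    proof
      fix x assume "x \<in> \<Union>S \<inter> \<Union>T"
      then obtain A B where AB: "A \<in> S" "B \<in> T" "x \<in> A" "x \<in> B" by blast
      moreover have "A \<in> topspace X // qrel X R" "B \<in> topspace X // qrel X R" using AB S T by auto
      ultimately have "A = B" using AB quotient_disj[OF assms, of A B] by blast
      then show "x \<in> \<Union>(S \<inter> T)" using AB by blast
    qed
  qed blast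
  moreover have "openin X (\<Union>S \<inter> \<Union>T)" using S T by (simp add: openin_Int)
  ultimately have o: "openin X (\<Union>(S \<inter> T))" by simp
  have s: "S \<inter> T \<subseteq> topspace X // qrel X R" using S by blast
  show "S \<inter> T \<subseteq> topspace X // qrel X R \<and> openin X (\<Union>(S \<inter> T))"
    using o s by blast
next
  fix K assume H: "\<forall>S\<in>K. S \<subseteq> topspace X // qrel X R \<and> openin X (\<Union>S)"
  have 1: "\<Union>K \<subseteq> topspace X // qrel X R" using H by blast
  have "\<Union>(\<Union>K) = (\<Union>S\<in>K. \<Union>S)" by blast
  then have 2: "openin X (\<Union>(\<Union>K))" using H by (auto intro: openin_Union)
  show "\<Union>K \<subseteq> topspace X // qrel X R \<and> openin X (\<Union>(\<Union>K))" using 1 2 by blast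
qed

definition inner_n :: "nat \<Rightarrow> (nat \<Rightarrow> real) \<Rightarrow> (nat \<Rightarrow> real) \<Rightarrow> real" where
  "inner_n n v w = (\<Sum>i<n. v i * w i)"

definition stiefel2 :: "nat \<Rightarrow> ((nat \<Rightarrow> real) \<times> (nat \<Rightarrow> real)) topology" where
  "stiefel2 n = subtopology (prod_topology (Euclidean_space n) (Euclidean_space n))
     {(v1, v2). inner_n n v1 v1 = 1 \<and> inner_n n v2 v2 = 1 \<and> inner_n n v1 v2 = 0}"

definition so2_act :: "real \<Rightarrow> (nat \<Rightarrow> real) \<times> (nat \<Rightarrow> real) \<Rightarrow> (nat \<Rightarrow> real) \<times> (nat \<Rightarrow> real)" where
  "so2_act \<theta> vw = (\<lambda>i. cos \<theta> * fst vw i + sin \<theta> * snd vw i,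
                    \<lambda>i. - sin \<theta> * fst vw i + cos \<theta> * snd vw i)"

definition grass2 :: "nat \<Rightarrow> ((nat \<Rightarrow> real) \<times> (nat \<Rightarrow> real)) set topology" where
  "grass2 n = quotient_top (stiefel2 n) (\<lambda>x y. \<exists>\<theta>. y = so2_act \<theta> x)"

text \<open>The block diagonal matrix diag(Q_{phi_0},...,Q_{phi_{k-1}}(,1)), k = n div 2,
  acting on R^n (coordinates indexed 0..n-1, block j acting on coordinates 2j, 2j+1).\<close>
definition torus_mat :: "nat \<Rightarrow> (nat \<Rightarrow> real) \<Rightarrow> (nat \<Rightarrow> real) \<Rightarrow> (nat \<Rightarrow> real)" where
  "torus_mat n \<phi> v = (\<lambda>i. if i < 2 * (n div 2) then
       (if even i then cos (\<phi> (i div 2)) * v i - sin (\<phi> (i div 2)) * v (Suc i)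
        else sin (\<phi> (i div 2)) * v (i - 1) + cos (\<phi> (i div 2)) * v i)
     else v i)"

definition torus_act_grass ::
  "nat \<Rightarrow> (nat \<Rightarrow> real) \<Rightarrow> ((nat \<Rightarrow> real) \<times> (nat \<Rightarrow> real)) set \<Rightarrow> ((nat \<Rightarrow> real) \<times> (nat \<Rightarrow> real)) set" where
  "torus_act_grass n \<phi> P = (\<lambda>(v1, v2). (torus_mat n \<phi> v1, torus_mat n \<phi> v2)) ` P"

definition grass2_mod_torus :: "nat \<Rightarrow> ((nat \<Rightarrow> real) \<times> (nat \<Rightarrow> real)) set set topology" where
  "grass2_mod_torus n = quotient_top (grass2 n) (\<lambda>P Q. \<exists>\<phi>. Q = torus_act_grass n \<phi> P)"

text \<open>Complex projective space P(C^d) = (C^d - 0)/C^*, i.e. CP^(d-1); empty for d = 0.\<close>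
definition complex_proj :: "nat \<Rightarrow> (nat \<Rightarrow> complex) set topology" where
  "complex_proj d = quotient_top
     (subtopology (product_topology (\<lambda>_. (euclidean :: complex topology)) UNIV)
        {z. (\<forall>i\<ge>d. z i = 0) \<and> (\<exists>i. z i \<noteq> 0)})
     (\<lambda>z w. \<exists>c. c \<noteq> 0 \<and> w = (\<lambda>i. c * z i))"

definition join_rel :: "'a \<times> 'b \<times> real \<Rightarrow> 'a \<times> 'b \<times> real \<Rightarrow> bool" where
  "join_rel p q = (p = q \<or>
     (snd (snd p) = 0 \<and> snd (snd q) = 0 \<and> fst (snd p) = fst (snd q)) \<or>
     (snd (snd p) = 1 \<and> snd (snd q) = 1 \<and> fst p = fst q))"

text \<open>A * B = (A x B x [0,1])/~ with (a,b,0) ~ (a',b,0), (a,b,1) ~ (a,b',1);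
  by convention A * (empty) = A, realised as (A x {pt} x {1})/~ (which is just a copy of A).\<close>
definition join_top :: "'a topology \<Rightarrow> 'b topology \<Rightarrow> ('a \<times> 'b \<times> real) set topology" where
  "join_top X Y =
     (if topspace Y = {} then
        quotient_top (prod_topology X (prod_topology (discrete_topology {undefined})
                        (subtopology euclideanreal {1}))) join_rel
      else
        quotient_top (prod_topology X (prod_topology Y (subtopology euclideanreal {0..1})))
          join_rel)"

end

theory Submission
  imports Defs
begin

definition clsq :: "'a topology \<Rightarrow> ('a \<Rightarrow> 'a \<Rightarrow> bool) \<Rightarrow> 'a \<Rightarrow> 'a set" where
  "clsq X R x = qrel X R `` {x}"

lemma topspace_quotient_top:
  assumes "equiv (topspace X) (qrel X R)"
  shows "topspace (quotient_top X R) = topspace X // qrel X R"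
proof -
  have "openin (quotient_top X R) = (\<lambda>U. U \<subseteq> topspace X // qrel X R \<and> openin X (\<Union>U))"
    unfolding quotient_top_def using istopology_quotient_top[OF assms] topology_inverse' by blast
  then have "openin (quotient_top X R) (topspace X // qrel X R)"
    using assms by (simp add: Union_quotient)
  then have "topspace X // qrel X R \<subseteq> topspace (quotient_top X R)"
    by (simp add: openin_subset)
  moreover have "topspace (quotient_top X R) \<subseteq> topspace X // qrel X R"
    using \<open>openin (quotient_top X R) = _\<close> by (metis openin_topspace)
  ultimately show ?thesis by blast
qed

lemma openin_quotient_top:
  assumes "equiv (topspace X) (qrel X R)"
  shows "openin (quotient_top X R) U \<longleftrightarrow> U \<subseteq> topspace X // qrel X R \<and> openin X (\<Union>U)"
  unfolding quotient_top_def using istopology_quotient_top[OF assms] topology_inverse' by metis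

lemma equiv_qrelI:
  assumes "\<And>x. x \<in> topspace X \<Longrightarrow> R x x"
    and "\<And>x y. x \<in> topspace X \<Longrightarrow> y \<in> topspace X \<Longrightarrow> R x y \<Longrightarrow> R y x"
    and "\<And>x y z. x \<in> topspace X \<Longrightarrow> y \<in> topspace X \<Longrightarrow> z \<in> topspace X \<Longrightarrow> R x y \<Longrightarrow> R y z \<Longrightarrow> R x z"
  shows "equiv (topspace X) (qrel X R)"
  unfolding equiv_def refl_on_def sym_def trans_def qrel_def using assms by blast

lemma quotient_map_clsq:
  assumes e: "equiv (topspace X) (qrel X R)"
  shows "quotient_map X (quotient_top X R) (clsq X R)"
  unfolding quotient_map_def
proof (intro conjI allI impI)
  show "clsq X R ` topspace X = topspace (quotient_top X R)"
    by (auto simp: topspace_quotient_top[OF e] quotient_def clsq_def)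
  fix U assume U: "U \<subseteq> topspace (quotient_top X R)"
  then have U': "U \<subseteq> topspace X // qrel X R" by (simp add: topspace_quotient_top[OF e])
  have "{x \<in> topspace X. clsq X R x \<in> U} = \<Union>U"
  proof
    show "{x \<in> topspace X. clsq X R x \<in> U} \<subseteq> \<Union>U"
    proof
      fix x assume "x \<in> {x \<in> topspace X. clsq X R x \<in> U}"
      then have "x \<in> topspace X" "clsq X R x \<in> U" by auto
      moreover have "x \<in> clsq X R x" using e \<open>x \<in> topspace X\<close> unfolding clsq_def
        by (simp add: equiv_class_self equiv_def refl_on_def)
      ultimately show "x \<in> \<Union>U" by blast
    qed
    show "\<Union>U \<subseteq> {x \<in> topspace X. clsq X R x \<in> U}"
    proof
      fix x assume "x \<in> \<Union>U"
      then obtain A where A: "A \<in> U" "x \<in> A" by blast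
      then have "A \<in> topspace X // qrel X R" using U' by blast
      then obtain a where a: "a \<in> topspace X" "A = qrel X R `` {a}" by (auto simp: quotient_def)
      then have "(a, x) \<in> qrel X R" using A by blast
      then have "qrel X R `` {x} = A" using a e by (metis equiv_class_eq_iff)
      moreover have "x \<in> topspace X" using \<open>(a, x) \<in> qrel X R\<close> by (simp add: qrel_def)
      ultimately show "x \<in> {x \<in> topspace X. clsq X R x \<in> U}" using A by (simp add: clsq_def)
    qed
  qed
  then show "openin X {x \<in> topspace X. clsq X R x \<in> U} = openin (quotient_top X R) U"
    using U' by (simp add: openin_quotient_top[OF e])
qed

lemma clsq_eq_iff:
  assumes e: "equiv (topspace X) (qrel X R)" and "x \<in> topspace X" "y \<in> topspace X"
  shows "clsq X R x = clsq X R y \<longleftrightarrow> R x y"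
proof -
  have "clsq X R x = clsq X R y \<longleftrightarrow> (x, y) \<in> qrel X R"
    unfolding clsq_def using e assms(2,3) by (rule eq_equiv_class_iff)
  then show ?thesis using assms by (simp add: qrel_def)
qed

lemma main_gen:
  assumes q: "quotient_map R J q" and F: "continuous_map R H F" and H: "Hausdorff_space H"
    and eq: "\<And>x y. x \<in> topspace R \<Longrightarrow> y \<in> topspace R \<Longrightarrow> F x = F y \<longleftrightarrow> q x = q y"
    and K: "compactin R K" and qK: "q ` K = topspace J"
  shows "J homeomorphic_space subtopology H (F ` topspace R)"
proof -
  obtain g where g: "continuous_map J H g" "g ` topspace J = F ` topspace R"
    "\<And>x. x \<in> topspace R \<Longrightarrow> g (q x) = F x"
    using quotient_map_lift_exists[OF q F] eq by metis
  have surj: "q ` topspace R = topspace J" using q by (simp add: quotient_map_def)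
  have inj: "inj_on g (topspace J)"
  proof (rule inj_onI)
    fix a b assume "a \<in> topspace J" "b \<in> topspace J" "g a = g b"
    then obtain x y where "x \<in> topspace R" "y \<in> topspace R" "a = q x" "b = q y"
      using surj by (metis imageE)
    then show "a = b" using \<open>g a = g b\<close> g(3) eq by metis
  qed
  have cq: "continuous_map R J q" using q quotient_imp_continuous_map by blast
  have "compactin J (q ` K)" using image_compactin[OF K cq] .
  then have "compact_space J" using qK by (simp add: compact_space_def)
  then have "embedding_map J H g" using continuous_imp_embedding_map g(1) H inj by blast
  then show ?thesis using embedding_map_imp_homeomorphic_space g(2) by metis
qed

lemma cont_fst_coord [continuous_intros]:
  fixes f :: "'a::topological_space \<Rightarrow> ('c \<Rightarrow> 'b::topological_space) \<times> ('c \<Rightarrow> 'b)"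
  assumes "continuous_on S f" shows "continuous_on S (\<lambda>x. fst (f x) i)"
proof -
  have "continuous_on S (\<lambda>x. fst (f x))" using assms by (rule continuous_on_fst)
  then show ?thesis by (rule continuous_on_product_then_coordinatewise)
qed

lemma cont_snd_coord [continuous_intros]:
  fixes f :: "'a::topological_space \<Rightarrow> ('c \<Rightarrow> 'b::topological_space) \<times> ('c \<Rightarrow> 'b)"
  assumes "continuous_on S f" shows "continuous_on S (\<lambda>x. snd (f x) i)"
proof -
  have "continuous_on S (\<lambda>x. snd (f x))" using assms by (rule continuous_on_snd)
  then show ?thesis by (rule continuous_on_product_then_coordinatewise)
qed

lemma cont_coord:
  "continuous_on S f \<Longrightarrow> continuous_on S (\<lambda>x. f x i :: 'b::topological_space)"
  by (rule continuous_on_product_then_coordinatewise)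

definition St :: "nat \<Rightarrow> ((nat \<Rightarrow> real) \<times> (nat \<Rightarrow> real)) set" where
  "St n = {(v1, v2). (\<forall>i\<ge>n. v1 i = 0) \<and> (\<forall>i\<ge>n. v2 i = 0) \<and>
      inner_n n v1 v1 = 1 \<and> inner_n n v2 v2 = 1 \<and> inner_n n v1 v2 = 0}"

lemma Euclidean_space_eq: "Euclidean_space n = top_of_set {x. \<forall>i\<ge>n. x i = 0}"
  by (simp add: Euclidean_space_def euclidean_product_topology)

lemma stiefel2_eq: "stiefel2 n = top_of_set (St n)"
proof -
  have "stiefel2 n = subtopology (top_of_set ({x. \<forall>i\<ge>n. x i = (0::real)} \<times> {x. \<forall>i\<ge>n. x i = 0}))
     {(v1, v2). inner_n n v1 v1 = 1 \<and> inner_n n v2 v2 = 1 \<and> inner_n n v1 v2 = 0}"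
    unfolding stiefel2_def Euclidean_space_eq prod_topology_subtopology(1) prod_topology_subtopology(2)
    by (simp add: subtopology_subtopology Times_Int_Times)
  also have "\<dots> = top_of_set (St n)"
    by (simp add: subtopology_subtopology St_def) (rule arg_cong[where f="top_of_set"], auto)
  finally show ?thesis .
qed

lemma inner_n_cont [continuous_intros]:
  "continuous_on S f \<Longrightarrow> continuous_on S g \<Longrightarrow> continuous_on S (\<lambda>x. inner_n n (f x) (g x))"
proof -
  assume a: "continuous_on S f" "continuous_on S g"
  have "\<And>i. continuous_on S (\<lambda>x. f x i)" "\<And>i. continuous_on S (\<lambda>x. g x i)"
    using a(1) apply (rule cont_coord) using a(2) by (rule cont_coord)
  then show ?thesis unfolding inner_n_def by (intro continuous_intros)
qed

lemma compact_cube: "compact (PiE UNIV (\<lambda>i::nat. {-1..1::real}))"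
proof -
  have "compactin (product_topology (\<lambda>i. euclidean) UNIV) (PiE UNIV (\<lambda>i::nat. {-1..1::real}))"
    by (simp add: compactin_PiE)
  then show ?thesis by (simp add: euclidean_product_topology)
qed

lemma inner_n_sq_le:
  assumes "inner_n n v v = 1" "i < n"
  shows "\<bar>v i\<bar> \<le> 1"
proof -
  have "v i * v i \<le> inner_n n v v"
    unfolding inner_n_def using assms(2)
    by (intro member_le_sum) auto
  then have "(v i)^2 \<le> 1" using assms by (simp add: power2_eq_square)
  then show ?thesis by (simp add: abs_square_le_1)
qed

lemma open_const_Collect: "open {x. P}" by (cases P) auto

lemma closed_St: "closed (St n)"
proof -
  have "St n = {x. \<forall>i. n \<le> i \<longrightarrow> fst x i = 0} \<inter> {x. \<forall>i. n \<le> i \<longrightarrow> snd x i = 0} \<inter>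
     {x. inner_n n (fst x) (fst x) = 1} \<inter> {x. inner_n n (snd x) (snd x) = 1} \<inter> {x. inner_n n (fst x) (snd x) = 0}"
    unfolding St_def by (auto simp: case_prod_beta)
  moreover have "closed {x::(nat\<Rightarrow>real)\<times>(nat\<Rightarrow>real). \<forall>i. n \<le> i \<longrightarrow> fst x i = 0}"
    by (intro closed_Collect_all closed_Collect_imp closed_Collect_eq continuous_on_const cont_fst_coord cont_snd_coord continuous_on_id open_const_Collect)
  moreover have "closed {x::(nat\<Rightarrow>real)\<times>(nat\<Rightarrow>real). \<forall>i. n \<le> i \<longrightarrow> snd x i = 0}"
    by (intro closed_Collect_all closed_Collect_imp closed_Collect_eq continuous_on_const cont_fst_coord cont_snd_coord continuous_on_id open_const_Collect)
  moreover have "closed {x::(nat\<Rightarrow>real)\<times>(nat\<Rightarrow>real). inner_n n (fst x) (fst x) = 1}"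
    by (intro closed_Collect_eq continuous_intros)
  moreover have "closed {x::(nat\<Rightarrow>real)\<times>(nat\<Rightarrow>real). inner_n n (snd x) (snd x) = 1}"
    by (intro closed_Collect_eq continuous_intros)
  moreover have "closed {x::(nat\<Rightarrow>real)\<times>(nat\<Rightarrow>real). inner_n n (fst x) (snd x) = 0}"
    by (intro closed_Collect_eq continuous_intros)
  ultimately show ?thesis by (simp only: closed_Int)
qed

lemma St_cube: "St n \<subseteq> PiE UNIV (\<lambda>i::nat. {-1..1::real}) \<times> PiE UNIV (\<lambda>i::nat. {-1..1::real})"
proof
  fix x assume x: "x \<in> St n"
  obtain v1 v2 where xv: "x = (v1, v2)" by fastforce
  have h: "(\<forall>i\<ge>n. v1 i = 0) \<and> (\<forall>i\<ge>n. v2 i = 0) \<and> inner_n n v1 v1 = 1 \<and> inner_n n v2 v2 = 1"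
    using x unfolding xv St_def by simp
  have "\<bar>v1 i\<bar> \<le> 1" "\<bar>v2 i\<bar> \<le> 1" for i
    using h inner_n_sq_le[of n v1 i] inner_n_sq_le[of n v2 i] by (cases "i < n"; simp)+
  then show "x \<in> PiE UNIV (\<lambda>i::nat. {-1..1::real}) \<times> PiE UNIV (\<lambda>i::nat. {-1..1::real})"
    unfolding xv by (auto simp: abs_le_iff)
qed

lemma compact_St: "compact (St n)"
proof -
  have "compact (PiE UNIV (\<lambda>i::nat. {-1..1::real}) \<times> PiE UNIV (\<lambda>i::nat. {-1..1::real}))"
    by (intro compact_Times compact_cube)
  then have "compact ((PiE UNIV (\<lambda>i::nat. {-1..1::real}) \<times> PiE UNIV (\<lambda>i::nat. {-1..1::real})) \<inter> St n)"
    using closed_St compact_Int_closed by blast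
  then show ?thesis using St_cube by (metis inf.absorb_iff2)
qed

lemma sum_blocks2:
  fixes f :: "nat \<Rightarrow> 'a::comm_monoid_add" and k :: nat
  shows "(\<Sum>i<2*k. f i) = (\<Sum>j<k. f (2*j) + f (2*j+1))"
  by (induction k) (auto simp: ac_simps)

lemma sum_blocks:
  fixes f :: "nat \<Rightarrow> 'a::comm_monoid_add" and n :: nat
  shows "(\<Sum>i<n. f i) = (\<Sum>j<n div 2. f (2*j) + f (2*j+1)) + (if odd n then f (n - 1) else 0)"
proof -
  define k where "k = n div 2"
  have "n = 2*k \<or> n = Suc (2*k)" unfolding k_def by presburger
  then show ?thesis
  proof
    assume h: "n = 2*k" show ?thesis unfolding h using sum_blocks2[of f k] by simp
  next
    assume h: "n = Suc (2*k)" show ?thesis unfolding h using sum_blocks2[of f k] by simp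
  qed
qed

lemma inner_n_sym: "inner_n n v w = inner_n n w v"
  unfolding inner_n_def by (simp add: mult.commute)

lemma inner_n_lin:
  "inner_n n (\<lambda>i. a * v i + b * w i) (\<lambda>i. c * v i + d * w i) =
     a*c*inner_n n v v + (a*d + b*c)*inner_n n v w + b*d*inner_n n w w"
proof -
  have "inner_n n (\<lambda>i. a * v i + b * w i) (\<lambda>i. c * v i + d * w i) =
    (\<Sum>i<n. a*c*(v i * v i) + (a*d + b*c)*(v i * w i) + b*d*(w i * w i))"
    unfolding inner_n_def by (rule sum.cong) (auto simp: algebra_simps)
  also have "\<dots> = a*c*inner_n n v v + (a*d + b*c)*inner_n n v w + b*d*inner_n n w w"
    unfolding inner_n_def by (simp add: sum.distrib sum_distrib_left)
  finally show ?thesis .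
qed

lemma so2_act_St:
  assumes "x \<in> St n" shows "so2_act \<theta> x \<in> St n"
proof -
  obtain v1 v2 where xv: "x = (v1, v2)" by fastforce
  have h: "(\<forall>i\<ge>n. v1 i = 0)" "(\<forall>i\<ge>n. v2 i = 0)" "inner_n n v1 v1 = 1" "inner_n n v2 v2 = 1" "inner_n n v1 v2 = 0"
    using assms unfolding xv St_def by simp_all
  have i2: "inner_n n v2 v1 = 0" using h(5) inner_n_sym by metis
  have e1: "inner_n n (\<lambda>i. cos \<theta> * v1 i + sin \<theta> * v2 i) (\<lambda>i. cos \<theta> * v1 i + sin \<theta> * v2 i) = 1"
    unfolding inner_n_lin h by (simp add: power2_eq_square[symmetric])
  have e2: "inner_n n (\<lambda>i. - sin \<theta> * v1 i + cos \<theta> * v2 i) (\<lambda>i. - sin \<theta> * v1 i + cos \<theta> * v2 i) = 1"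
    unfolding inner_n_lin h by (simp add: power2_eq_square[symmetric])
  have e3: "inner_n n (\<lambda>i. cos \<theta> * v1 i + sin \<theta> * v2 i) (\<lambda>i. - sin \<theta> * v1 i + cos \<theta> * v2 i) = 0"
    unfolding inner_n_lin h by (simp add: algebra_simps)
  show ?thesis unfolding xv so2_act_def St_def using h e1 e2 e3 by simp
qed

lemma so2_act_0: "so2_act 0 x = x"
  by (simp add: so2_act_def)

lemma so2_act_add: "so2_act a (so2_act b x) = so2_act (a + b) x"
  by (auto simp: so2_act_def cos_add sin_add algebra_simps)

definition Tm :: "nat \<Rightarrow> (nat \<Rightarrow> real) \<Rightarrow> (nat \<Rightarrow> real) \<times> (nat \<Rightarrow> real) \<Rightarrow> (nat \<Rightarrow> real) \<times> (nat \<Rightarrow> real)" where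
  "Tm n \<phi> x = (torus_mat n \<phi> (fst x), torus_mat n \<phi> (snd x))"

lemma torus_mat_even: "j < n div 2 \<Longrightarrow> torus_mat n \<phi> v (2*j) = cos (\<phi> j) * v (2*j) - sin (\<phi> j) * v (2*j+1)"
  by (simp add: torus_mat_def)

lemma torus_mat_odd: "j < n div 2 \<Longrightarrow> torus_mat n \<phi> v (2*j+1) = sin (\<phi> j) * v (2*j) + cos (\<phi> j) * v (2*j+1)"
  by (simp add: torus_mat_def)

lemma torus_mat_odd': "j < n div 2 \<Longrightarrow> torus_mat n \<phi> v (Suc (2*j)) = sin (\<phi> j) * v (2*j) + cos (\<phi> j) * v (Suc (2*j))"
  using torus_mat_odd by simp

lemma torus_mat_high: "i \<ge> 2 * (n div 2) \<Longrightarrow> torus_mat n \<phi> v i = v i"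
  by (simp add: torus_mat_def)

lemma rot_block:
  fixes s c a b a' b' :: real
  assumes "s^2 + c^2 = 1"
  shows "(c*a - s*b)*(c*a' - s*b') + (s*a + c*b)*(s*a'+c*b') = a*a' + b*b'"
proof -
  have "(c*a - s*b)*(c*a' - s*b') + (s*a + c*b)*(s*a'+c*b') = (s^2 + c^2)*(a*a' + b*b')"
    by (simp add: algebra_simps power2_eq_square)
  then show ?thesis using assms by simp
qed

lemma torus_mat_inner: "inner_n n (torus_mat n \<phi> v) (torus_mat n \<phi> w) = inner_n n v w"
proof -
  have blk: "torus_mat n \<phi> v (2*j) * torus_mat n \<phi> w (2*j) + torus_mat n \<phi> v (Suc (2*j)) * torus_mat n \<phi> w (Suc (2*j))
      = v (2*j) * w (2*j) + v (Suc (2*j)) * w (Suc (2*j))" if "j < n div 2" for j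
  proof -
    show ?thesis using that rot_block[OF sin_cos_squared_add] by (simp add: torus_mat_even torus_mat_odd')
  qed
  have le: "odd n \<Longrightarrow> 2*(n div 2) \<le> n - Suc 0" by presburger
  have hi: "odd n \<Longrightarrow> torus_mat n \<phi> v (n - Suc 0) = v (n - Suc 0)" "odd n \<Longrightarrow> torus_mat n \<phi> w (n - Suc 0) = w (n - Suc 0)"
    using le torus_mat_high by blast+
  show ?thesis unfolding inner_n_def
    by (subst sum_blocks, subst (2) sum_blocks) (simp add: blk hi)
qed

lemma torus_mat_lin:
  "torus_mat n \<phi> (\<lambda>i. a * v i + b * w i) = (\<lambda>i. a * torus_mat n \<phi> v i + b * torus_mat n \<phi> w i)"
  by (auto simp: torus_mat_def algebra_simps)

lemma torus_mat_zero: "torus_mat n (\<lambda>_. 0) v = v"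
  by (auto simp: torus_mat_def)

lemma torus_mat_add: "torus_mat n \<phi> (torus_mat n \<psi> v) = torus_mat n (\<lambda>j. \<phi> j + \<psi> j) v"
proof
  fix i
  show "torus_mat n \<phi> (torus_mat n \<psi> v) i = torus_mat n (\<lambda>j. \<phi> j + \<psi> j) v i"
  proof (cases "i < 2 * (n div 2)")
    case True
    show ?thesis
    proof (cases "even i")
      case True
      then obtain j where j: "i = 2*j" by blast
      then have "j < n div 2" using \<open>i < 2 * (n div 2)\<close> by simp
      then show ?thesis unfolding j by (simp only: torus_mat_even torus_mat_odd) (simp add: cos_add sin_add algebra_simps)
    next
      case False
      then obtain j where j: "i = 2*j+1" using oddE by blast
      then have "j < n div 2" using \<open>i < 2 * (n div 2)\<close> by simp
      then show ?thesis unfolding j by (simp only: torus_mat_even torus_mat_odd) (simp add: cos_add sin_add algebra_simps)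
    qed
  next
    case False
    then show ?thesis by (simp add: torus_mat_high)
  qed
qed

lemma Tm_St: assumes "x \<in> St n" shows "Tm n \<phi> x \<in> St n"
proof -
  obtain v1 v2 where xv: "x = (v1, v2)" by fastforce
  have h: "(\<forall>i\<ge>n. v1 i = 0)" "(\<forall>i\<ge>n. v2 i = 0)" "inner_n n v1 v1 = 1" "inner_n n v2 v2 = 1" "inner_n n v1 v2 = 0"
    using assms unfolding xv St_def by simp_all
  have "\<forall>i\<ge>n. torus_mat n \<phi> v1 i = 0" "\<forall>i\<ge>n. torus_mat n \<phi> v2 i = 0"
    using h by (auto simp: torus_mat_high)
  then show ?thesis unfolding xv Tm_def St_def using h by (simp add: torus_mat_inner)
qed

lemma Tm_so2: "Tm n \<phi> (so2_act \<theta> x) = so2_act \<theta> (Tm n \<phi> x)"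
proof -
  have "torus_mat n \<phi> (\<lambda>i. - sin \<theta> * fst x i + cos \<theta> * snd x i) =
     (\<lambda>i. - sin \<theta> * torus_mat n \<phi> (fst x) i + cos \<theta> * torus_mat n \<phi> (snd x) i)"
    by (rule torus_mat_lin)
  then show ?thesis unfolding Tm_def so2_act_def by (simp add: torus_mat_lin)
qed

lemma Tm_zero: "Tm n (\<lambda>_. 0) x = x" by (simp add: Tm_def torus_mat_zero)

lemma Tm_add: "Tm n \<phi> (Tm n \<psi> x) = Tm n (\<lambda>j. \<phi> j + \<psi> j) x"
  by (simp add: Tm_def torus_mat_add)

abbreviation Rso :: "(nat \<Rightarrow> real) \<times> (nat \<Rightarrow> real) \<Rightarrow> (nat \<Rightarrow> real) \<times> (nat \<Rightarrow> real) \<Rightarrow> bool" where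
  "Rso \<equiv> (\<lambda>x y. \<exists>\<theta>. y = so2_act \<theta> x)"

abbreviation Rt :: "nat \<Rightarrow> ((nat \<Rightarrow> real) \<times> (nat \<Rightarrow> real)) set \<Rightarrow> ((nat \<Rightarrow> real) \<times> (nat \<Rightarrow> real)) set \<Rightarrow> bool" where
  "Rt n \<equiv> (\<lambda>P Q. \<exists>\<phi>. Q = torus_act_grass n \<phi> P)"

lemma topspace_stiefel2: "topspace (stiefel2 n) = St n"
  by (simp add: stiefel2_eq)

lemma equiv_so: "equiv (topspace (stiefel2 n)) (qrel (stiefel2 n) Rso)"
proof (rule equiv_qrelI)
  fix x show "Rso x x" using so2_act_0 by metis
next
  fix x y assume "Rso x y"
  then obtain \<theta> where "y = so2_act \<theta> x" by blast
  then have "x = so2_act (-\<theta>) y" by (simp add: so2_act_add so2_act_0)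
  then show "Rso y x" by blast
next
  fix x y z assume "Rso x y" "Rso y z"
  then show "Rso x z" using so2_act_add by metis
qed

lemma torus_act_grass_eq: "torus_act_grass n \<phi> P = Tm n \<phi> ` P"
  unfolding torus_act_grass_def Tm_def by (auto simp: case_prod_beta image_def)

lemma Tm_inv: "Tm n (\<lambda>j. - \<phi> j) (Tm n \<phi> x) = x"
  by (simp add: Tm_add Tm_zero)

lemma equiv_t: "equiv (topspace (grass2 n)) (qrel (grass2 n) (Rt n))"
proof (rule equiv_qrelI)
  fix P show "Rt n P P"
    by (rule exI[of _ "\<lambda>_. 0"]) (simp add: torus_act_grass_eq Tm_zero)
next
  fix P Q assume "Rt n P Q"
  then obtain \<phi> where "Q = Tm n \<phi> ` P" by (auto simp: torus_act_grass_eq)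
  then have "P = Tm n (\<lambda>j. - \<phi> j) ` Q" by (simp add: image_image Tm_inv)
  then show "Rt n Q P" by (auto simp: torus_act_grass_eq)
next
  fix P Q S assume "Rt n P Q" "Rt n Q S"
  then obtain \<phi> \<psi> where "Q = Tm n \<phi> ` P" "S = Tm n \<psi> ` Q" by (auto simp: torus_act_grass_eq)
  then have "S = Tm n (\<lambda>j. \<psi> j + \<phi> j) ` P" by (simp add: image_image Tm_add)
  then show "Rt n P S" by (auto simp: torus_act_grass_eq)
qed

definition pG :: "nat \<Rightarrow> (nat \<Rightarrow> real) \<times> (nat \<Rightarrow> real) \<Rightarrow> ((nat \<Rightarrow> real) \<times> (nat \<Rightarrow> real)) set set" where
  "pG n = clsq (grass2 n) (Rt n) \<circ> clsq (stiefel2 n) Rso"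

lemma quotient_map_so: "quotient_map (stiefel2 n) (grass2 n) (clsq (stiefel2 n) Rso)"
  unfolding grass2_def by (rule quotient_map_clsq[OF equiv_so])

lemma quotient_map_pG: "quotient_map (stiefel2 n) (grass2_mod_torus n) (pG n)"
  unfolding pG_def grass2_mod_torus_def
  by (rule quotient_map_compose[OF quotient_map_so quotient_map_clsq[OF equiv_t]])

lemma cls_so_in: "x \<in> St n \<Longrightarrow> clsq (stiefel2 n) Rso x \<in> topspace (grass2 n)"
  using quotient_map_so[of n] unfolding quotient_map_def topspace_stiefel2
  by blast

lemma torus_cls: assumes "x \<in> St n"
  shows "torus_act_grass n \<phi> (clsq (stiefel2 n) Rso x) = clsq (stiefel2 n) Rso (Tm n \<phi> x)"
proof -
  have "Tm n \<phi> ` {y \<in> St n. \<exists>\<theta>. y = so2_act \<theta> x} = {y \<in> St n. \<exists>\<theta>. y = so2_act \<theta> (Tm n \<phi> x)}"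
  proof
    show "Tm n \<phi> ` {y \<in> St n. \<exists>\<theta>. y = so2_act \<theta> x} \<subseteq> {y \<in> St n. \<exists>\<theta>. y = so2_act \<theta> (Tm n \<phi> x)}"
      using Tm_St Tm_so2 by fastforce
    show "{y \<in> St n. \<exists>\<theta>. y = so2_act \<theta> (Tm n \<phi> x)} \<subseteq> Tm n \<phi> ` {y \<in> St n. \<exists>\<theta>. y = so2_act \<theta> x}"
    proof
      fix y assume "y \<in> {y \<in> St n. \<exists>\<theta>. y = so2_act \<theta> (Tm n \<phi> x)}"
      then obtain \<theta> where y: "y = so2_act \<theta> (Tm n \<phi> x)" by blast
      then have "y = Tm n \<phi> (so2_act \<theta> x)" by (simp add: Tm_so2)
      moreover have "so2_act \<theta> x \<in> St n" using so2_act_St assms by blast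
      ultimately show "y \<in> Tm n \<phi> ` {y \<in> St n. \<exists>\<theta>. y = so2_act \<theta> x}" by blast
    qed
  qed
  moreover have "clsq (stiefel2 n) Rso x = {y \<in> St n. \<exists>\<theta>. y = so2_act \<theta> x}"
    using assms by (auto simp: clsq_def qrel_def topspace_stiefel2)
  moreover have "clsq (stiefel2 n) Rso (Tm n \<phi> x) = {y \<in> St n. \<exists>\<theta>. y = so2_act \<theta> (Tm n \<phi> x)}"
    using assms Tm_St by (auto simp: clsq_def qrel_def topspace_stiefel2)
  ultimately show ?thesis by (simp add: torus_act_grass_eq)
qed

lemma pG_eq_iff:
  assumes "x \<in> St n" "y \<in> St n"
  shows "pG n x = pG n y \<longleftrightarrow> (\<exists>\<phi> \<theta>. y = so2_act \<theta> (Tm n \<phi> x))"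
proof -
  have "pG n x = pG n y \<longleftrightarrow> Rt n (clsq (stiefel2 n) Rso x) (clsq (stiefel2 n) Rso y)"
    unfolding pG_def o_def by (rule clsq_eq_iff[OF equiv_t cls_so_in[OF assms(1)] cls_so_in[OF assms(2)]])
  also have "\<dots> \<longleftrightarrow> (\<exists>\<phi>. clsq (stiefel2 n) Rso y = clsq (stiefel2 n) Rso (Tm n \<phi> x))"
    using torus_cls[OF assms(1)] by auto
  also have "\<dots> \<longleftrightarrow> (\<exists>\<phi>. Rso (Tm n \<phi> x) y)"
  proof -
    have "clsq (stiefel2 n) Rso y = clsq (stiefel2 n) Rso (Tm n \<phi> x) \<longleftrightarrow> Rso (Tm n \<phi> x) y" for \<phi>
      using clsq_eq_iff[OF equiv_so, of "Tm n \<phi> x" n y] Tm_St[OF assms(1)] assms(2)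
      by (auto simp: topspace_stiefel2)
    then show ?thesis by blast
  qed
  finally show ?thesis by blast
qed

lemma compact_stiefel: "compact_space (stiefel2 n)"
  by (simp add: stiefel2_eq compact_space_subtopology compact_St)

definition cz :: "(nat \<Rightarrow> real) \<times> (nat \<Rightarrow> real) \<Rightarrow> nat \<Rightarrow> complex" where
  "cz x i = Complex (fst x i) (snd x i)"

definition wp :: "(nat \<Rightarrow> real) \<times> (nat \<Rightarrow> real) \<Rightarrow> nat \<Rightarrow> complex" where
  "wp x j = cz x (2*j) + \<i> * cz x (Suc (2*j))"

definition wm :: "(nat \<Rightarrow> real) \<times> (nat \<Rightarrow> real) \<Rightarrow> nat \<Rightarrow> complex" where
  "wm x j = cz x (2*j) - \<i> * cz x (Suc (2*j))"

definition dd :: "(nat \<Rightarrow> real) \<times> (nat \<Rightarrow> real) \<Rightarrow> nat \<Rightarrow> real" where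
  "dd x j = (cmod (wp x j))^2 - (cmod (wm x j))^2"

definition cc :: "(nat \<Rightarrow> real) \<times> (nat \<Rightarrow> real) \<Rightarrow> nat \<Rightarrow> complex" where
  "cc x j = wp x j * wm x j"

lemma cz_so2: "cz (so2_act \<theta> x) i = cis (-\<theta>) * cz x i"
  by (simp add: cz_def so2_act_def complex_eq_iff cis.ctr algebra_simps)

lemma cz_Tm_even: "j < n div 2 \<Longrightarrow> cz (Tm n \<phi> x) (2*j) = of_real (cos (\<phi> j)) * cz x (2*j) - of_real (sin (\<phi> j)) * cz x (Suc (2*j))"
  by (simp add: cz_def Tm_def torus_mat_even complex_eq_iff)

lemma cz_Tm_odd: "j < n div 2 \<Longrightarrow> cz (Tm n \<phi> x) (Suc (2*j)) = of_real (sin (\<phi> j)) * cz x (2*j) + of_real (cos (\<phi> j)) * cz x (Suc (2*j))"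
  by (simp add: cz_def Tm_def torus_mat_odd' complex_eq_iff)

lemma cz_Tm_high: "i \<ge> 2 * (n div 2) \<Longrightarrow> cz (Tm n \<phi> x) i = cz x i"
  by (simp add: cz_def Tm_def torus_mat_high)

lemma wp_Tm: "j < n div 2 \<Longrightarrow> wp (Tm n \<phi> x) j = cis (\<phi> j) * wp x j"
  unfolding wp_def by (simp only: cz_Tm_even cz_Tm_odd) (simp add: cis.ctr complex_eq_iff algebra_simps)

lemma wm_Tm: "j < n div 2 \<Longrightarrow> wm (Tm n \<phi> x) j = cis (- \<phi> j) * wm x j"
  unfolding wm_def by (simp only: cz_Tm_even cz_Tm_odd) (simp add: cis.ctr complex_eq_iff algebra_simps)

lemma wp_so2: "wp (so2_act \<theta> x) j = cis (-\<theta>) * wp x j"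
  by (simp add: wp_def cz_so2 algebra_simps)

lemma wm_so2: "wm (so2_act \<theta> x) j = cis (-\<theta>) * wm x j"
  by (simp add: wm_def cz_so2 algebra_simps)

lemma cz_from_w: "cz x (2*j) = (wp x j + wm x j) / 2" "cz x (Suc (2*j)) = (wp x j - wm x j) / (2 * \<i>)"
  by (simp_all add: wp_def wm_def field_simps)

lemma cc_alt: "cc x j = (cz x (2*j))^2 + (cz x (Suc (2*j)))^2"
  by (simp add: cc_def wp_def wm_def algebra_simps power2_eq_square)

lemma norm_cis_mult: "cmod (cis a * z) = cmod z"
  by (simp add: norm_mult)

lemma dd_Tm: "j < n div 2 \<Longrightarrow> dd (Tm n \<phi> x) j = dd x j"
  by (simp add: dd_def wp_Tm wm_Tm norm_mult)

lemma cc_Tm: "j < n div 2 \<Longrightarrow> cc (Tm n \<phi> x) j = cc x j"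
proof -
  assume j: "j < n div 2"
  have "cis (\<phi> j) * cis (- \<phi> j) = 1" by (simp add: cis_mult)
  then show ?thesis using j by (simp add: cc_def wp_Tm wm_Tm algebra_simps)
qed

lemma dd_so2: "dd (so2_act \<theta> x) j = dd x j"
  by (simp add: dd_def wp_so2 wm_so2 norm_mult)

lemma cc_so2: "cc (so2_act \<theta> x) j = cis (-2*\<theta>) * cc x j"
proof -
  have "cis (-\<theta>) * cis (-\<theta>) = cis (-2*\<theta>)" by (simp add: cis_mult)
  then show ?thesis by (simp add: cc_def wp_so2 wm_so2 algebra_simps)
qed

lemma St_complex:
  assumes "x \<in> St n"
  shows "(\<Sum>i<n. (cz x i)^2) = 0" "(\<Sum>i<n. (cmod (cz x i))^2) = 2" "\<And>i. i \<ge> n \<Longrightarrow> cz x i = 0"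
proof -
  obtain v1 v2 where xv: "x = (v1, v2)" by fastforce
  have h: "(\<forall>i\<ge>n. v1 i = 0)" "(\<forall>i\<ge>n. v2 i = 0)" "inner_n n v1 v1 = 1" "inner_n n v2 v2 = 1" "inner_n n v1 v2 = 0"
    using assms unfolding xv St_def by simp_all
  have "(\<Sum>i<n. (cz x i)^2) = (\<Sum>i<n. Complex (v1 i * v1 i - v2 i * v2 i) (2 * (v1 i * v2 i)))"
    by (rule sum.cong) (auto simp: xv cz_def complex_eq_iff power2_eq_square)
  also have "\<dots> = Complex (inner_n n v1 v1 - inner_n n v2 v2) (2 * inner_n n v1 v2)"
    by (simp add: complex_eq_iff inner_n_def Re_sum Im_sum sum_subtractf sum_distrib_left)
  also have "\<dots> = 0" using h by (simp add: complex_eq_iff)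
  finally show "(\<Sum>i<n. (cz x i)^2) = 0" .
  have "(\<Sum>i<n. (cmod (cz x i))^2) = (\<Sum>i<n. (v1 i)^2 + (v2 i)^2)"
    by (rule sum.cong) (auto simp: xv cz_def cmod_power2)
  also have "\<dots> = (\<Sum>i<n. v1 i * v1 i + v2 i * v2 i)" by (simp add: power2_eq_square)
  also have "\<dots> = 2" using h by (simp add: inner_n_def sum.distrib)
  finally show "(\<Sum>i<n. (cmod (cz x i))^2) = 2" .
  fix i assume "i \<ge> n" then show "cz x i = 0" using h by (simp add: xv cz_def complex_eq_iff)
qed

lemma sum_cc:
  "(\<Sum>i<n. (cz x i)^2) = (\<Sum>j<n div 2. cc x j) + (if odd n then (cz x (n - 1))^2 else 0)"
  by (subst sum_blocks) (simp add: cc_alt)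

lemma w_zero:
  assumes "dd x j = 0" "cc x j = 0"
  shows "cz x (2*j) = 0" "cz x (Suc (2*j)) = 0"
proof -
  have "wp x j = 0 \<or> wm x j = 0" using assms(2) by (simp add: cc_def)
  moreover have "cmod (wp x j) = cmod (wm x j)" using assms(1) by (simp add: dd_def)
  ultimately have "wp x j = 0" "wm x j = 0" by auto
  then show "cz x (2*j) = 0" "cz x (Suc (2*j)) = 0" by (simp_all add: cz_from_w)
qed

lemma St_nonzero:
  assumes "x \<in> St n"
  shows "\<exists>j < n div 2. dd x j \<noteq> 0 \<or> cc x j \<noteq> 0"
proof (rule ccontr)
  assume "\<not> ?thesis"
  then have z: "\<forall>j<n div 2. dd x j = 0 \<and> cc x j = 0" by auto
  then have z1: "cz x (2*j) = 0" "cz x (Suc (2*j)) = 0" if "j < n div 2" for j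
    using w_zero that by blast+
  have s0: "(\<Sum>j<n div 2. cc x j) = 0" using z by simp
  have "odd n \<Longrightarrow> (cz x (n - 1))^2 = 0"
    using St_complex(1)[OF assms] sum_cc[of x n] s0 by simp
  then have zodd: "odd n \<Longrightarrow> cz x (n - 1) = 0" by simp
  have "(\<Sum>i<n. (cmod (cz x i))^2) = 0"
    using zodd by (subst sum_blocks) (simp add: z1)
  then show False using St_complex(2)[OF assms] by simp
qed

definition nrmR :: "nat \<Rightarrow> (nat \<Rightarrow> real) \<Rightarrow> real" where
  "nrmR k D = sqrt (\<Sum>j<k. (D j)^2)"

definition nrmC :: "nat \<Rightarrow> (nat \<Rightarrow> complex) \<Rightarrow> real" where
  "nrmC k c = sqrt (\<Sum>j<k. (cmod (c j))^2)"

definition rho :: "nat \<Rightarrow> (nat \<Rightarrow> real) \<Rightarrow> (nat \<Rightarrow> complex) \<Rightarrow> real" where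
  "rho n D c = nrmR (n div 2) D + nrmC (n div 2) c"

definition Hdata :: "nat \<Rightarrow> (nat \<Rightarrow> real) \<Rightarrow> (nat \<Rightarrow> complex) \<Rightarrow> (nat \<Rightarrow> real) \<times> (nat \<times> nat \<Rightarrow> complex)" where
  "Hdata n D c = ((\<lambda>j. if j < n div 2 then D j else 0),
     (\<lambda>pq. if fst pq < n div 2 \<and> snd pq < n div 2 then c (fst pq) * cnj (c (snd pq)) else 0))"

definition rx :: "nat \<Rightarrow> (nat \<Rightarrow> real) \<times> (nat \<Rightarrow> real) \<Rightarrow> real" where
  "rx n x = rho n (dd x) (cc x)"

definition Phi :: "nat \<Rightarrow> (nat \<Rightarrow> real) \<times> (nat \<Rightarrow> real) \<Rightarrow> (nat \<Rightarrow> real) \<times> (nat \<times> nat \<Rightarrow> complex)" where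
  "Phi n x = Hdata n (\<lambda>j. dd x j / rx n x) (\<lambda>j. cc x j / of_real (rx n x))"

lemma nrmR_nonneg: "nrmR k D \<ge> 0" by (simp add: nrmR_def sum_nonneg)
lemma nrmC_nonneg: "nrmC k c \<ge> 0" by (simp add: nrmC_def sum_nonneg)

lemma nrmR_pos: "j < k \<Longrightarrow> D j \<noteq> 0 \<Longrightarrow> nrmR k D > 0"
proof -
  assume "j < k" "D j \<noteq> 0"
  then have "0 < (D j)^2" by simp
  also have "(D j)^2 \<le> (\<Sum>j<k. (D j)^2)" using \<open>j < k\<close> by (intro member_le_sum) auto
  finally show ?thesis by (simp add: nrmR_def)
qed

lemma nrmC_pos: "j < k \<Longrightarrow> c j \<noteq> 0 \<Longrightarrow> nrmC k c > 0"
proof -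
  assume "j < k" "c j \<noteq> 0"
  then have "0 < (cmod (c j))^2" by simp
  also have "(cmod (c j))^2 \<le> (\<Sum>j<k. (cmod (c j))^2)" using \<open>j < k\<close> by (intro member_le_sum) auto
  finally show ?thesis by (simp add: nrmC_def)
qed

lemma rx_pos: assumes "x \<in> St n" shows "rx n x > 0"
proof -
  obtain j where j: "j < n div 2" "dd x j \<noteq> 0 \<or> cc x j \<noteq> 0" using St_nonzero[OF assms] by blast
  have a: "nrmR (n div 2) (dd x) \<ge> 0" "nrmC (n div 2) (cc x) \<ge> 0" by (rule nrmR_nonneg, rule nrmC_nonneg)
  show ?thesis
  proof (cases "dd x j \<noteq> 0")
    case True
    then have "nrmR (n div 2) (dd x) > 0" using nrmR_pos[OF j(1)] by blast
    then show ?thesis using a unfolding rx_def rho_def by linarith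
  next
    case False
    then have "nrmC (n div 2) (cc x) > 0" using nrmC_pos[OF j(1)] j(2) by blast
    then show ?thesis using a unfolding rx_def rho_def by linarith
  qed
qed

lemma unit_cis: assumes "cmod u = 1" shows "cis (Arg u) = u"
proof -
  have "u \<noteq> 0" using assms by auto
  then have "cis (Arg u) = sgn u" by (rule cis_Arg)
  also have "sgn u = u" using assms by (simp add: sgn_div_norm)
  finally show ?thesis .
qed

lemma unit_cnj: assumes "cmod u = 1" shows "cnj u * u = 1"
proof -
  have "cnj u * u = of_real ((cmod u)^2)" by (subst complex_norm_square) (simp add: mult.commute)
  then show ?thesis using assms by simp
qed

lemma Hdata_unit:
  assumes "cmod u = 1" "\<And>j. j < n div 2 \<Longrightarrow> c' j = u * c j" "\<And>j. j < n div 2 \<Longrightarrow> D' j = D j"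
  shows "Hdata n D' c' = Hdata n D c"
proof -
  have uu: "u * cnj u = 1" using unit_cnj[OF assms(1)] by (simp add: mult.commute)
  have "c' p * cnj (c' q) = c p * cnj (c q)" if "p < n div 2" "q < n div 2" for p q
  proof -
    have "c' p * cnj (c' q) = (u * cnj u) * (c p * cnj (c q))" using that assms(2) by (simp add: algebra_simps)
    then show ?thesis using uu by simp
  qed
  then show ?thesis unfolding Hdata_def using assms(3) by (auto simp: fun_eq_iff)
qed

lemma sum_cong_lt: "(\<And>j. j < k \<Longrightarrow> f j = g j) \<Longrightarrow> (\<Sum>j<k. f j) = (\<Sum>j<k. g j)"
  by (rule sum.cong) auto

lemma rho_unit:
  assumes "cmod u = 1" "\<And>j. j < n div 2 \<Longrightarrow> c' j = u * c j" "\<And>j. j < n div 2 \<Longrightarrow> D' j = D j"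
  shows "rho n D' c' = rho n D c"
proof -
  have "nrmR (n div 2) D' = nrmR (n div 2) D" unfolding nrmR_def using assms(3) by (simp cong: sum_cong_lt)
  moreover have "nrmC (n div 2) c' = nrmC (n div 2) c" unfolding nrmC_def using assms(1,2) by (simp add: norm_mult cong: sum_cong_lt)
  ultimately show ?thesis by (simp add: rho_def)
qed

lemma Phi_inv: "Phi n (so2_act \<theta> (Tm n \<phi> x)) = Phi n x"
proof -
  let ?y = "so2_act \<theta> (Tm n \<phi> x)"
  have u: "cmod (cis (-2*\<theta>)) = 1" by simp
  have c: "cc ?y j = cis (-2*\<theta>) * cc x j" if "j < n div 2" for j
    using that by (simp add: cc_so2 cc_Tm)
  have d: "dd ?y j = dd x j" if "j < n div 2" for j
    using that by (simp add: dd_so2 dd_Tm)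
  have r: "rx n ?y = rx n x" unfolding rx_def by (rule rho_unit[OF u c d])
  show ?thesis unfolding Phi_def r
    by (rule Hdata_unit[OF u]) (simp_all add: c d)
qed

lemma Hdata_inj:
  assumes "Hdata n D c = Hdata n D' c'"
  shows "(\<forall>j < n div 2. D' j = D j) \<and> (\<exists>u. cmod u = 1 \<and> (\<forall>j < n div 2. c' j = u * c j))"
proof -
  let ?k = "n div 2"
  have dj: "\<forall>j < ?k. D' j = D j"
  proof (intro allI impI)
    fix j assume "j < ?k"
    then show "D' j = D j" using fun_cong[OF arg_cong[OF assms, of fst], of j] by (simp add: Hdata_def)
  qed
  have cpq: "c' p * cnj (c' q) = c p * cnj (c q)" if "p < ?k" "q < ?k" for p q
    using fun_cong[OF arg_cong[OF assms, of snd], of "(p, q)"] that by (simp add: Hdata_def)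
  have nrm: "cmod (c' p) = cmod (c p)" if "p < ?k" for p
  proof -
    have "complex_of_real ((cmod (c' p))^2) = complex_of_real ((cmod (c p))^2)"
      using cpq[OF that that] by (simp only: complex_norm_square)
    then have "(cmod (c' p))^2 = (cmod (c p))^2" by (simp only: of_real_eq_iff)
    then show ?thesis by (simp add: power2_eq_iff_nonneg)
  qed
  show ?thesis
  proof (cases "\<exists>p < ?k. c p \<noteq> 0")
    case False
    then have "\<forall>j<?k. c' j = 1 * c j" using nrm by auto
    moreover have "cmod (1::complex) = 1" by simp
    ultimately show ?thesis using dj by blast
  next
    case True
    then obtain p where p: "p < ?k" "c p \<noteq> 0" by blast
    define u where "u = c' p / c p"
    have u1: "cmod u = 1" using nrm[OF p(1)] p(2) by (simp add: u_def norm_divide)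
    have cpu: "c' p = u * c p" using p(2) by (simp add: u_def)
    have "c' q = u * c q" if "q < ?k" for q
    proof -
      have e: "c' q * cnj (c' p) = c q * cnj (c p)" using cpq[OF that p(1)] .
      have "cnj (c' p) = cnj u * cnj (c p)" using cpu by simp
      then have "c' q * cnj u * cnj (c p) = c q * cnj (c p)" using e by (simp add: mult.assoc)
      then have "c' q * cnj u = c q" using p(2) by simp
      then have A: "c' q * (cnj u * u) = c q * u" by (simp add: mult.assoc[symmetric])
      have B: "cnj u * u = 1" using u1 by (rule unit_cnj)
      from A have "c' q = c q * u" unfolding B by simp
      then show ?thesis by (simp add: mult.commute)
    qed
    then show ?thesis using dj u1 by blast
  qed
qed

lemma block_match:
  fixes V V' W W' :: complex
  assumes d: "(cmod V)^2 - (cmod V')^2 = (cmod W)^2 - (cmod W')^2" and p: "V * V' = W * W'"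
  shows "\<exists>\<phi>. V = cis \<phi> * W \<and> V' = cis (-\<phi>) * W'"
proof -
  define A where "A = (cmod V)^2" define B where "B = (cmod V')^2"
  define A' where "A' = (cmod W)^2" define B' where "B' = (cmod W')^2"
  have "cmod V * cmod V' = cmod W * cmod W'" using arg_cong[OF p, of cmod] by (simp add: norm_mult)
  then have AB: "A * B = A' * B'" unfolding A_def B_def A'_def B'_def by (metis power_mult_distrib)
  have dd: "A - B = A' - B'" using d unfolding A_def B_def A'_def B'_def .
  have "(A + B)^2 = (A - B)^2 + 4 * (A * B)" by (simp add: power2_eq_square algebra_simps)
  also have "\<dots> = (A' + B')^2" unfolding dd AB by (simp add: power2_eq_square algebra_simps)
  finally have "(A + B)^2 = (A' + B')^2" .
  moreover have "A + B \<ge> 0" "A' + B' \<ge> 0" unfolding A_def B_def A'_def B'_def by simp_all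
  ultimately have "A + B = A' + B'" by (simp add: power2_eq_iff_nonneg)
  then have "A = A'" "B = B'" using dd by linarith+
  then have nV: "cmod V = cmod W" and nV': "cmod V' = cmod W'"
    unfolding A_def B_def A'_def B'_def by (simp_all add: power2_eq_iff_nonneg)
  show ?thesis
  proof (cases "W = 0")
    case False
    define \<zeta> where "\<zeta> = V / W"
    have z1: "cmod \<zeta> = 1" using nV False by (simp add: \<zeta>_def norm_divide)
    have V: "V = \<zeta> * W" using False by (simp add: \<zeta>_def)
    have "\<zeta> * W * V' = W * W'" using p V by simp
    then have "\<zeta> * V' = W'" using False by (simp add: mult.commute mult.left_commute)
    then have "cnj \<zeta> * \<zeta> * V' = cnj \<zeta> * W'" by (simp add: mult.assoc)
    then have V': "V' = cnj \<zeta> * W'" using unit_cnj[OF z1] by simp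
    have "V = cis (Arg \<zeta>) * W \<and> V' = cis (- Arg \<zeta>) * W'"
      using V V' unit_cis[OF z1] by (metis cis_cnj)
    then show ?thesis by blast
  next
    case True
    then have V0: "V = 0" using nV by simp
    show ?thesis
    proof (cases "W' = 0")
      case True
      then have "V' = 0" using nV' by simp
      then show ?thesis using V0 True \<open>W = 0\<close> by simp
    next
      case False
      define \<zeta> where "\<zeta> = V' / W'"
      have z1: "cmod \<zeta> = 1" using nV' False by (simp add: \<zeta>_def norm_divide)
      have V': "V' = \<zeta> * W'" using False by (simp add: \<zeta>_def)
      have "V = cis (- Arg \<zeta>) * W \<and> V' = cis (- (- Arg \<zeta>)) * W'"
        using V' unit_cis[OF z1] V0 \<open>W = 0\<close> by simp
      then show ?thesis by blast
    qed
  qed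
qed

lemma cz_inj: assumes "\<And>i. cz x i = cz y i" shows "x = y"
proof -
  have "fst x = fst y" "snd x = snd y"
    using assms by (auto simp: fun_eq_iff cz_def complex_eq_iff)
  then show ?thesis by (simp add: prod_eq_iff)
qed

lemma cz_so2_wp: "wp (so2_act \<theta> x) j = cis (-\<theta>) * wp x j" by (rule wp_so2)

lemma cis_half_sq: "cis (a/2) * cis (a/2) = cis a"
  by (simp add: cis_mult)

lemma Phi_inj:
  assumes x: "x \<in> St n" and y: "y \<in> St n" and eq: "Phi n x = Phi n y"
  shows "\<exists>\<phi> \<theta>. y = so2_act \<theta> (Tm n \<phi> x)"
proof -
  define k where "k = n div 2"
  define a where "a = rx n x"
  define b where "b = rx n y"
  have a0: "a > 0" using rx_pos[OF x] by (simp add: a_def)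
  have b0: "b > 0" using rx_pos[OF y] by (simp add: b_def)
  obtain u where u1: "cmod u = 1" and
      cu: "\<forall>j<k. cc y j / of_real b = u * (cc x j / of_real a)" and
      du: "\<forall>j<k. dd y j / b = dd x j / a"
    using Hdata_inj[OF eq[unfolded Phi_def]] unfolding k_def a_def b_def by blast
  define l where "l = b / a"
  have l0: "l > 0" using a0 b0 by (simp add: l_def)
  define s where "s = sqrt l"
  have s0: "s > 0" using l0 by (simp add: s_def)
  have ssl: "s * s = l" using l0 by (simp add: s_def)
  have dl: "dd y j = l * dd x j" if "j < k" for j
    using du that a0 b0 by (auto simp: l_def field_simps)
  have cl: "cc y j = of_real l * u * cc x j" if "j < k" for j
  proof -
    have "cc y j / of_real b = u * (cc x j / of_real a)" using cu that by blast
    then show ?thesis using a0 b0 by (simp add: l_def field_simps)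
  qed
  define \<alpha> where "\<alpha> = Arg u"
  have ua: "cis \<alpha> = u" using unit_cis[OF u1] by (simp add: \<alpha>_def)
  define \<nu>0 where "\<nu>0 = cis (\<alpha>/2)"
  have nu0sq: "\<nu>0 * \<nu>0 = u" using ua cis_half_sq by (simp add: \<nu>0_def)
  define zx where "zx = cz x (n - 1)"
  define zy where "zy = cz y (n - 1)"
  have sumc: "(\<Sum>j<k. cc y j) = of_real l * u * (\<Sum>j<k. cc x j)"
    by (simp add: cl sum_distrib_left cong: sum_cong_lt)
  have zsq: "zy^2 = (of_real s * \<nu>0 * zx)^2" if "odd n"
  proof -
    have "(\<Sum>j<k. cc y j) + zy^2 = 0" "(\<Sum>j<k. cc x j) + zx^2 = 0"
      using St_complex(1)[OF y] sum_cc[of y n] St_complex(1)[OF x] sum_cc[of x n] that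
      by (simp_all add: k_def zx_def zy_def)
    then have "zy^2 = of_real l * u * zx^2" using sumc
      by (metis add.commute add_eq_0_iff2 mult_minus_right)
    also have "\<dots> = (of_real s * \<nu>0 * zx)^2"
      using ssl nu0sq by (simp add: power2_eq_square algebra_simps flip: of_real_mult)
    finally show ?thesis .
  qed
  define \<beta> where "\<beta> = (if odd n \<and> zy \<noteq> of_real s * \<nu>0 * zx then \<alpha>/2 + pi else \<alpha>/2)"
  define \<nu> where "\<nu> = cis \<beta>"
  have nusq: "\<nu> * \<nu> = u"
  proof -
    have "\<nu> * \<nu> = cis (2 * \<beta>)" by (simp add: \<nu>_def cis_mult)
    also have "\<dots> = cis \<alpha>"
      by (auto simp: \<beta>_def complex_eq_iff cos_add sin_add)
    finally show ?thesis using ua by simp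
  qed
  have zyx: "zy = of_real s * \<nu> * zx" if "odd n"
  proof (cases "zy = of_real s * \<nu>0 * zx")
    case True
    then show ?thesis by (simp add: \<nu>_def \<beta>_def \<nu>0_def)
  next
    case False
    then have "zy = - (of_real s * \<nu>0 * zx)" using zsq[OF that] by (simp add: power2_eq_iff)
    moreover have "\<nu> = - \<nu>0" using False that by (simp add: \<nu>_def \<beta>_def \<nu>0_def complex_eq_iff)
    ultimately show ?thesis by simp
  qed
  define \<theta> where "\<theta> = - \<beta>"
  define x1 where "x1 = so2_act \<theta> x"
  have x1St: "x1 \<in> St n" using so2_act_St[OF x] by (simp add: x1_def)
  have czx1: "cz x1 i = \<nu> * cz x i" for i by (simp add: x1_def cz_so2 \<theta>_def \<nu>_def)
  have wpx1: "wp x1 j = \<nu> * wp x j" for j by (simp add: x1_def wp_so2 \<theta>_def \<nu>_def)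
  have wmx1: "wm x1 j = \<nu> * wm x j" for j by (simp add: x1_def wm_so2 \<theta>_def \<nu>_def)
  have nnu: "cmod \<nu> = 1" by (simp add: \<nu>_def)
  have blk: "\<exists>\<phi>. wp y j = cis \<phi> * (of_real s * wp x1 j) \<and> wm y j = cis (-\<phi>) * (of_real s * wm x1 j)"
    if "j < k" for j
  proof (rule block_match)
    have "(cmod (wp y j))^2 - (cmod (wm y j))^2 = l * ((cmod (wp x j))^2 - (cmod (wm x j))^2)"
      using dl[OF that] by (simp add: dd_def)
    also have "\<dots> = (cmod (of_real s * wp x1 j))^2 - (cmod (of_real s * wm x1 j))^2"
      using s0 nnu by (simp add: wpx1 wmx1 norm_mult power_mult_distrib power2_eq_square ssl[symmetric] algebra_simps)
    finally show "(cmod (wp y j))^2 - (cmod (wm y j))^2 = (cmod (of_real s * wp x1 j))^2 - (cmod (of_real s * wm x1 j))^2" .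
    have "wp y j * wm y j = of_real l * u * (wp x j * wm x j)" using cl[OF that] by (simp add: cc_def)
    also have "\<dots> = (of_real s * wp x1 j) * (of_real s * wm x1 j)"
      using ssl nusq by (simp add: wpx1 wmx1 algebra_simps flip: of_real_mult)
    finally show "wp y j * wm y j = (of_real s * wp x1 j) * (of_real s * wm x1 j)" .
  qed
  then have "\<forall>j. \<exists>\<phi>. j < k \<longrightarrow> wp y j = cis \<phi> * (of_real s * wp x1 j) \<and> wm y j = cis (-\<phi>) * (of_real s * wm x1 j)"
    by blast
  then obtain \<phi> where phi: "\<And>j. j < k \<Longrightarrow> wp y j = cis (\<phi> j) * (of_real s * wp x1 j) \<and> wm y j = cis (-\<phi> j) * (of_real s * wm x1 j)"
    by metis
  define x2 where "x2 = Tm n \<phi> x1"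
  have x2St: "x2 \<in> St n" using Tm_St[OF x1St] by (simp add: x2_def)
  have wpy: "wp y j = of_real s * wp x2 j" and wmy: "wm y j = of_real s * wm x2 j" if "j < k" for j
    using phi[OF that] that by (simp_all add: x2_def wp_Tm wm_Tm k_def algebra_simps)
  have czy: "cz y i = of_real s * cz x2 i" for i
  proof (cases "i < 2 * k")
    case True
    show ?thesis
    proof (cases "even i")
      case True
      then obtain j where j: "i = 2 * j" by blast
      then have "j < k" using \<open>i < 2 * k\<close> by simp
      then show ?thesis unfolding j cz_from_w by (simp add: wpy wmy algebra_simps add_divide_distrib)
    next
      case False
      then obtain j where j: "i = Suc (2 * j)" using oddE by fastforce
      then have "j < k" using \<open>i < 2 * k\<close> by simp
      then show ?thesis unfolding j cz_from_w by (simp add: wpy wmy algebra_simps diff_divide_distrib)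
    qed
  next
    case False
    show ?thesis
    proof (cases "i < n")
      case True
      have on: "odd n" using True False unfolding k_def by presburger
      have i: "i = n - 1" using True False unfolding k_def by presburger
      have "cz x2 i = cz x1 i" unfolding x2_def using False by (intro cz_Tm_high) (simp add: k_def)
      then show ?thesis using zyx[OF on] czx1 by (simp add: i zy_def zx_def)
    next
      case False
      then show ?thesis using St_complex(3)[OF y] St_complex(3)[OF x2St] by simp
    qed
  qed
  have "(\<Sum>i<n. (cmod (cz y i))^2) = l * (\<Sum>i<n. (cmod (cz x2 i))^2)"
    using s0 by (simp add: czy norm_mult power_mult_distrib sum_distrib_left power2_eq_square ssl[symmetric] algebra_simps)
  then have "l = 1" using St_complex(2)[OF y] St_complex(2)[OF x2St] by simp
  then have "s = 1" using s_def by simp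
  then have "y = x2" using czy by (intro cz_inj) simp
  then have "y = so2_act \<theta> (Tm n \<phi> x)" by (simp add: x2_def x1_def Tm_so2)
  then show ?thesis by blast
qed

lemma Hdata_cont:
  assumes "\<And>j. continuous_on S (\<lambda>x. D x j)" "\<And>j. continuous_on S (\<lambda>x. C x j)"
  shows "continuous_on S (\<lambda>x. Hdata n (D x) (C x))"
  unfolding Hdata_def
proof (intro continuous_on_Pair continuous_on_coordinatewise_then_product)
  fix j show "continuous_on S (\<lambda>x. if j < n div 2 then D x j else 0)"
    using assms(1) by (cases "j < n div 2") simp_all
next
  fix pq :: "nat \<times> nat"
  show "continuous_on S (\<lambda>x. if fst pq < n div 2 \<and> snd pq < n div 2 then C x (fst pq) * cnj (C x (snd pq)) else 0)"
  proof (cases "fst pq < n div 2 \<and> snd pq < n div 2")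
    case True
    have c: "continuous_on S (\<lambda>x. C x (fst pq) * cnj (C x (snd pq)))"
      by (intro continuous_on_mult continuous_on_cnj assms(2))
    have e: "(\<lambda>x. if fst pq < n div 2 \<and> snd pq < n div 2 then C x (fst pq) * cnj (C x (snd pq)) else 0) = (\<lambda>x. C x (fst pq) * cnj (C x (snd pq)))"
      using True by (intro ext if_P)
    show ?thesis by (subst e) (rule c)
  next
    case False
    then have e: "(\<lambda>x. if fst pq < n div 2 \<and> snd pq < n div 2 then C x (fst pq) * cnj (C x (snd pq)) else 0) = (\<lambda>x. 0)"
      by (intro ext if_not_P)
    show ?thesis by (subst e) (rule continuous_on_const)
  qed
qed

lemma cz_cont: "continuous_on S (\<lambda>x. cz x i)"
proof -
  have "continuous_on S (\<lambda>x. complex_of_real (fst x i) + \<i> * complex_of_real (snd x i))"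
    by (intro continuous_intros cont_fst_coord cont_snd_coord continuous_on_id)
  then show ?thesis by (simp add: cz_def Complex_eq)
qed

lemma wp_cont: "continuous_on S (\<lambda>x. wp x j)"
  unfolding wp_def by (intro continuous_intros cz_cont)

lemma wm_cont: "continuous_on S (\<lambda>x. wm x j)"
  unfolding wm_def by (intro continuous_intros cz_cont)

lemma dd_cont: "continuous_on S (\<lambda>x. dd x j)"
  unfolding dd_def by (intro continuous_intros wp_cont wm_cont)

lemma cc_cont: "continuous_on S (\<lambda>x. cc x j)"
  unfolding cc_def by (intro continuous_intros wp_cont wm_cont)

lemma rx_cont: "continuous_on S (\<lambda>x. rx n x)"
proof -
  have a: "continuous_on S (\<lambda>x. (\<Sum>j<n div 2. (dd x j)^2))"
    by (intro continuous_on_sum continuous_on_power dd_cont)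
  have b: "continuous_on S (\<lambda>x. (\<Sum>j<n div 2. (cmod (cc x j))^2))"
    by (intro continuous_on_sum continuous_on_power continuous_on_norm cc_cont)
  show ?thesis unfolding rx_def rho_def nrmR_def nrmC_def
    by (intro continuous_on_add continuous_on_real_sqrt a b)
qed

lemma Phi_cont: "continuous_on (St n) (Phi n)"
proof -
  have nz: "\<And>x. x \<in> St n \<Longrightarrow> rx n x \<noteq> 0" using rx_pos by fastforce
  have "continuous_on (St n) (\<lambda>x. Hdata n (\<lambda>j. dd x j / rx n x) (\<lambda>j. cc x j / of_real (rx n x)))"
  proof (rule Hdata_cont)
    fix j
    show "continuous_on (St n) (\<lambda>x. dd x j / rx n x)"
      using nz by (intro continuous_on_divide dd_cont rx_cont) auto
    show "continuous_on (St n) (\<lambda>x. cc x j / of_real (rx n x))"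
      using nz by (intro continuous_on_divide continuous_on_of_real cc_cont rx_cont) auto
  qed
  then show ?thesis unfolding Phi_def[abs_def] .
qed

lemma Hausdorff_H: "Hausdorff_space (euclidean :: ((nat \<Rightarrow> real) \<times> (nat \<times> nat \<Rightarrow> complex)) topology)"
proof -
  have "Hausdorff_space (product_topology (\<lambda>i::nat. euclidean :: real topology) UNIV)"
    by (simp add: Hausdorff_space_product_topology)
  then have a: "Hausdorff_space (euclidean :: (nat \<Rightarrow> real) topology)"
    by (simp only: euclidean_product_topology)
  have "Hausdorff_space (product_topology (\<lambda>i::nat\<times>nat. euclidean :: complex topology) UNIV)"
    by (simp add: Hausdorff_space_product_topology)
  then have b: "Hausdorff_space (euclidean :: (nat \<times> nat \<Rightarrow> complex) topology)"
    by (simp only: euclidean_product_topology)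
  have "Hausdorff_space (prod_topology (euclidean :: (nat \<Rightarrow> real) topology) (euclidean :: (nat \<times> nat \<Rightarrow> complex) topology))"
    using a b Hausdorff_space_prod_topology by blast
  then show ?thesis by simp
qed

lemma GT_homeo: "grass2_mod_torus n homeomorphic_space top_of_set (Phi n ` St n)"
proof -
  have "grass2_mod_torus n homeomorphic_space subtopology euclidean (Phi n ` topspace (stiefel2 n))"
  proof (rule main_gen[OF quotient_map_pG _ Hausdorff_H])
    show "continuous_map (stiefel2 n) euclidean (Phi n)"
      unfolding stiefel2_eq continuous_map_iff_continuous by (rule Phi_cont)
    fix x y assume "x \<in> topspace (stiefel2 n)" "y \<in> topspace (stiefel2 n)"
    then have xy: "x \<in> St n" "y \<in> St n" by (simp_all add: topspace_stiefel2)
    show "Phi n x = Phi n y \<longleftrightarrow> pG n x = pG n y"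
    proof
      assume "Phi n x = Phi n y"
      then show "pG n x = pG n y" using Phi_inj[OF xy] pG_eq_iff[OF xy] by blast
    next
      assume "pG n x = pG n y"
      then obtain \<phi> \<theta> where "y = so2_act \<theta> (Tm n \<phi> x)" using pG_eq_iff[OF xy] by blast
      then show "Phi n x = Phi n y" by (simp add: Phi_inv)
    qed
  next
    show "compactin (stiefel2 n) (topspace (stiefel2 n))"
      using compact_stiefel[of n] unfolding compact_space_def .
    show "pG n ` topspace (stiefel2 n) = topspace (grass2_mod_torus n)"
      using quotient_map_pG[of n] unfolding quotient_map_def by (rule conjunct1)
  qed
  then show ?thesis unfolding topspace_stiefel2 .
qed

definition constr :: "nat \<Rightarrow> (nat \<Rightarrow> complex) \<Rightarrow> bool" where
  "constr n c = (even n \<longrightarrow> (\<Sum>j<n div 2. c j) = 0)"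

definition Kset :: "nat \<Rightarrow> ((nat \<Rightarrow> real) \<times> (nat \<times> nat \<Rightarrow> complex)) set" where
  "Kset n = {Hdata n D c | D c. constr n c \<and> rho n D c = 1}"

lemma Hdata_cong:
  assumes "\<And>j. j < n div 2 \<Longrightarrow> D' j = D j" "\<And>j. j < n div 2 \<Longrightarrow> c' j = c j"
  shows "Hdata n D' c' = Hdata n D c"
  using Hdata_unit[of 1 n c' c D' D] assms by simp

lemma rho_cong:
  assumes "\<And>j. j < n div 2 \<Longrightarrow> D' j = D j" "\<And>j. j < n div 2 \<Longrightarrow> c' j = c j"
  shows "rho n D' c' = rho n D c"
  using rho_unit[of 1 n c' c D' D] assms by simp

lemma nrmR_scale: "s \<ge> 0 \<Longrightarrow> nrmR k (\<lambda>j. s * D j) = s * nrmR k D"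
  by (simp add: nrmR_def power_mult_distrib sum_distrib_left[symmetric] real_sqrt_mult)

lemma nrmC_scale: "s \<ge> 0 \<Longrightarrow> nrmC k (\<lambda>j. of_real s * c j) = s * nrmC k c"
  by (simp add: nrmC_def norm_mult power_mult_distrib sum_distrib_left[symmetric] real_sqrt_mult)

lemma rho_scale: "s \<ge> 0 \<Longrightarrow> rho n (\<lambda>j. s * D j) (\<lambda>j. of_real s * c j) = s * rho n D c"
  by (simp add: rho_def nrmR_scale nrmC_scale algebra_simps)

lemma Phi_in_K: assumes x: "x \<in> St n" shows "Phi n x \<in> Kset n"
proof -
  let ?r = "rx n x"
  have r0: "?r > 0" using rx_pos[OF x] .
  have "constr n (\<lambda>j. cc x j / of_real ?r)"
  proof -
    have "even n \<Longrightarrow> (\<Sum>j<n div 2. cc x j) = 0" using St_complex(1)[OF x] sum_cc[of x n] by simp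
    then show ?thesis unfolding constr_def by (simp add: sum_divide_distrib[symmetric])
  qed
  moreover have "rho n (\<lambda>j. dd x j / ?r) (\<lambda>j. cc x j / of_real ?r) = 1"
  proof -
    have "rho n (\<lambda>j. dd x j / ?r) (\<lambda>j. cc x j / of_real ?r) = rho n (\<lambda>j. (1 / ?r) * dd x j) (\<lambda>j. of_real (1 / ?r) * cc x j)"
      by (simp add: field_simps)
    also have "\<dots> = (1 / ?r) * ?r" using r0 by (subst rho_scale) (simp_all add: rx_def)
    finally show ?thesis using r0 by simp
  qed
  ultimately show ?thesis unfolding Kset_def Phi_def by blast
qed

definition rr :: "(nat \<Rightarrow> real) \<Rightarrow> (nat \<Rightarrow> complex) \<Rightarrow> nat \<Rightarrow> real" where
  "rr D c j = sqrt ((D j)^2 + 4 * (cmod (c j))^2)"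
definition PP :: "(nat \<Rightarrow> real) \<Rightarrow> (nat \<Rightarrow> complex) \<Rightarrow> nat \<Rightarrow> real" where
  "PP D c j = sqrt ((rr D c j + D j) / 2)"
definition QQ :: "(nat \<Rightarrow> real) \<Rightarrow> (nat \<Rightarrow> complex) \<Rightarrow> nat \<Rightarrow> real" where
  "QQ D c j = sqrt ((rr D c j - D j) / 2)"
definition WW :: "(nat \<Rightarrow> real) \<Rightarrow> (nat \<Rightarrow> complex) \<Rightarrow> nat \<Rightarrow> complex" where
  "WW D c j = of_real (PP D c j)"
definition WW' :: "(nat \<Rightarrow> real) \<Rightarrow> (nat \<Rightarrow> complex) \<Rightarrow> nat \<Rightarrow> complex" where
  "WW' D c j = (if PP D c j = 0 then of_real (QQ D c j) else c j / of_real (PP D c j))"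

lemma WW_props: "(cmod (WW D c j))^2 - (cmod (WW' D c j))^2 = D j \<and> WW D c j * WW' D c j = c j"
proof -
  define r where "r = rr D c j"
  have "sqrt ((D j)^2) \<le> r" unfolding r_def rr_def by (intro real_sqrt_le_mono) simp
  then have rD: "\<bar>D j\<bar> \<le> r" by simp
  have P2: "(PP D c j)^2 = (r + D j) / 2" using rD by (simp add: PP_def r_def)
  have Q2: "(QQ D c j)^2 = (r - D j) / 2" using rD by (simp add: QQ_def r_def)
  have r2: "r^2 = (D j)^2 + 4 * (cmod (c j))^2" unfolding r_def rr_def
    by (simp add: add_nonneg_nonneg)
  have PQ: "(PP D c j)^2 * (QQ D c j)^2 = (cmod (c j))^2"
    unfolding P2 Q2 using r2 by (simp add: field_simps power2_eq_square)
  show ?thesis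
  proof (cases "PP D c j = 0")
    case True
    then have "(cmod (c j))^2 = 0" using PQ by simp
    then have c0: "c j = 0" by simp
    have "r + D j = 0" using P2 True by simp
    then show ?thesis using True c0 Q2 by (simp add: WW_def WW'_def)
  next
    case False
    have "(cmod (WW' D c j))^2 = (cmod (c j))^2 / (PP D c j)^2"
      using False by (simp add: WW'_def norm_divide power_divide)
    also have "\<dots> = (QQ D c j)^2" using False PQ by (simp add: field_simps)
    finally show ?thesis using False P2 Q2 by (simp add: WW_def WW'_def)
  qed
qed

definition zz :: "nat \<Rightarrow> (nat \<Rightarrow> real) \<Rightarrow> (nat \<Rightarrow> complex) \<Rightarrow> nat \<Rightarrow> complex" where
  "zz n D c i = (if i < 2 * (n div 2) then
      (if even i then (WW D c (i div 2) + WW' D c (i div 2)) / 2 else (WW D c (i div 2) - WW' D c (i div 2)) / (2 * \<i>))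
     else if odd n \<and> i = 2 * (n div 2) then csqrt (- (\<Sum>j<n div 2. c j)) else 0)"

lemma zz_even: "j < n div 2 \<Longrightarrow> zz n D c (2*j) = (WW D c j + WW' D c j) / 2"
  by (simp add: zz_def)
lemma zz_odd: "j < n div 2 \<Longrightarrow> zz n D c (Suc (2*j)) = (WW D c j - WW' D c j) / (2 * \<i>)"
  by (simp add: zz_def)
lemma zz_high: assumes "i \<ge> n" shows "zz n D c i = 0"
proof -
  have "\<not> i < 2 * (n div 2)" "\<not> (odd n \<and> i = 2 * (n div 2))" using assms by presburger+
  then show ?thesis unfolding zz_def by auto
qed
lemma zz_last: "odd n \<Longrightarrow> zz n D c (n - Suc 0) = csqrt (- (\<Sum>j<n div 2. c j))"
proof -
  assume "odd n"
  then have "n - Suc 0 = 2 * (n div 2)" by presburger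
  then show ?thesis using \<open>odd n\<close> by (simp add: zz_def)
qed

lemma St_from_complex:
  assumes "\<And>i. i \<ge> n \<Longrightarrow> cz x i = 0" "(\<Sum>i<n. (cz x i)^2) = 0" "(\<Sum>i<n. (cmod (cz x i))^2) = 2"
  shows "x \<in> St n"
proof -
  obtain v1 v2 where xv: "x = (v1, v2)" by fastforce
  have z: "\<forall>i\<ge>n. v1 i = 0" "\<forall>i\<ge>n. v2 i = 0" using assms(1) by (auto simp: xv cz_def complex_eq_iff)
  have "(\<Sum>i<n. (cz x i)^2) = Complex (inner_n n v1 v1 - inner_n n v2 v2) (2 * inner_n n v1 v2)"
  proof -
    have "(\<Sum>i<n. (cz x i)^2) = (\<Sum>i<n. Complex (v1 i * v1 i - v2 i * v2 i) (2 * (v1 i * v2 i)))"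
      by (rule sum.cong) (auto simp: xv cz_def complex_eq_iff power2_eq_square)
    also have "\<dots> = Complex (inner_n n v1 v1 - inner_n n v2 v2) (2 * inner_n n v1 v2)"
      by (simp add: complex_eq_iff inner_n_def Re_sum Im_sum sum_subtractf sum_distrib_left)
    finally show ?thesis .
  qed
  then have e1: "inner_n n v1 v1 = inner_n n v2 v2" "inner_n n v1 v2 = 0" using assms(2) by (simp_all add: complex_eq_iff)
  have "(\<Sum>i<n. (cmod (cz x i))^2) = (\<Sum>i<n. (v1 i)^2 + (v2 i)^2)"
    by (rule sum.cong) (auto simp: xv cz_def cmod_power2)
  also have "\<dots> = inner_n n v1 v1 + inner_n n v2 v2" by (simp add: inner_n_def power2_eq_square sum.distrib)
  finally have "inner_n n v1 v1 + inner_n n v2 v2 = 2" using assms(3) by simp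
  then show ?thesis using z e1 by (simp add: xv St_def)
qed

lemma K_in_Phi:
  assumes con: "constr n c" and r1: "rho n D c = 1"
  shows "Hdata n D c \<in> Phi n ` St n"
proof -
  let ?k = "n div 2"
  let ?z = "zz n D c"
  have wz: "?z (2*j) + \<i> * ?z (Suc (2*j)) = WW D c j" "?z (2*j) - \<i> * ?z (Suc (2*j)) = WW' D c j" if "j < ?k" for j
    using that by (simp_all only: zz_even zz_odd) (simp_all add: field_simps)
  have sq: "(\<Sum>i<n. (?z i)^2) = 0"
  proof -
    have b: "(?z (2*j))^2 + (?z (Suc (2*j)))^2 = c j" if "j < ?k" for j
    proof -
      have "(?z (2*j))^2 + (?z (Suc (2*j)))^2 = WW D c j * WW' D c j"
        using that by (simp only: zz_even zz_odd) (simp add: field_simps power2_eq_square)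
      then show ?thesis using WW_props by simp
    qed
    have "(\<Sum>i<n. (?z i)^2) = (\<Sum>j<?k. c j) + (if odd n then (?z (n - 1))^2 else 0)"
      by (subst sum_blocks) (simp add: b cong: sum_cong_lt)
    also have "\<dots> = 0" using con by (auto simp: constr_def zz_last)
    finally show ?thesis .
  qed
  obtain j where j: "j < ?k" "D j \<noteq> 0 \<or> c j \<noteq> 0"
  proof (rule ccontr)
    assume "\<not> thesis"
    then have "\<forall>j<?k. D j = 0 \<and> c j = 0" using that by blast
    then have "rho n D c = 0" by (simp add: rho_def nrmR_def nrmC_def cong: sum_cong_lt)
    then show False using r1 by simp
  qed
  have "WW D c j \<noteq> 0 \<or> WW' D c j \<noteq> 0" using j(2) WW_props[of D c j] by auto
  then have "?z (2*j) \<noteq> 0 \<or> ?z (Suc (2*j)) \<noteq> 0" using wz[OF j(1)] by auto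
  moreover have "2*j < n" "Suc (2*j) < n" using j(1) by presburger+
  ultimately obtain i where i: "i < n" "?z i \<noteq> 0" by blast
  define N where "N = (\<Sum>i<n. (cmod (?z i))^2)"
  have N0: "N > 0"
  proof -
    have "0 < (cmod (?z i))^2" using i by simp
    also have "\<dots> \<le> N" unfolding N_def using i(1) by (intro member_le_sum) auto
    finally show ?thesis .
  qed
  define t where "t = sqrt (2 / N)"
  have t0: "t > 0" using N0 by (simp add: t_def)
  have tt: "t * t * N = 2" using N0 by (simp add: t_def)
  define x0 where "x0 = ((\<lambda>i. t * Re (?z i)), (\<lambda>i. t * Im (?z i)))"
  have czx: "cz x0 i = of_real t * ?z i" for i by (simp add: x0_def cz_def complex_eq_iff)
  have x0St: "x0 \<in> St n"
  proof (rule St_from_complex)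
    show "\<And>i. n \<le> i \<Longrightarrow> cz x0 i = 0" by (simp add: czx zz_high)
    show "(\<Sum>i<n. (cz x0 i)^2) = 0" using sq by (simp add: czx power_mult_distrib sum_distrib_left[symmetric])
    have "(\<Sum>i<n. (cmod (cz x0 i))^2) = (\<Sum>i<n. (t*t) * (cmod (?z i))^2)"
      using t0 by (intro sum.cong) (simp_all add: czx norm_mult power_mult_distrib power2_eq_square)
    also have "\<dots> = t * t * N" by (simp add: N_def sum_distrib_left)
    finally show "(\<Sum>i<n. (cmod (cz x0 i))^2) = 2" using tt by simp
  qed
  have wpx: "wp x0 j = of_real t * WW D c j" if "j < ?k" for j
  proof -
    have "of_real t * WW D c j = of_real t * (?z (2*j) + \<i> * ?z (Suc (2*j)))" using wz(1)[OF that] by simp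
    then show ?thesis by (simp add: wp_def czx algebra_simps)
  qed
  have wmx: "wm x0 j = of_real t * WW' D c j" if "j < ?k" for j
  proof -
    have "of_real t * WW' D c j = of_real t * (?z (2*j) - \<i> * ?z (Suc (2*j)))" using wz(2)[OF that] by simp
    then show ?thesis by (simp add: wm_def czx algebra_simps)
  qed
  have ddx: "dd x0 j = (t * t) * D j" if "j < ?k" for j
  proof -
    have "dd x0 j = (t * t) * ((cmod (WW D c j))^2 - (cmod (WW' D c j))^2)"
      using t0 by (simp add: dd_def wpx[OF that] wmx[OF that] norm_mult power_mult_distrib power2_eq_square algebra_simps)
    then show ?thesis using WW_props[of D c j] by simp
  qed
  have ccx: "cc x0 j = of_real (t * t) * c j" if "j < ?k" for j
  proof -
    have "cc x0 j = of_real (t * t) * (WW D c j * WW' D c j)"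
      by (simp add: cc_def wpx[OF that] wmx[OF that] algebra_simps)
    then show ?thesis using WW_props[of D c j] by simp
  qed
  have rxx: "rx n x0 = t * t"
  proof -
    have "rx n x0 = rho n (\<lambda>j. (t * t) * D j) (\<lambda>j. of_real (t * t) * c j)"
      unfolding rx_def by (rule rho_cong) (simp_all add: ddx ccx)
    also have "\<dots> = t * t" using r1 by (subst rho_scale) simp_all
    finally show ?thesis .
  qed
  have "Phi n x0 = Hdata n D c"
    unfolding Phi_def rxx using t0 by (intro Hdata_cong) (simp_all add: ddx ccx)
  then show ?thesis using x0St by (rule image_eqI[OF sym])
qed

lemma Phi_image: "Phi n ` St n = Kset n"
proof
  show "Phi n ` St n \<subseteq> Kset n" using Phi_in_K by blast
  show "Kset n \<subseteq> Phi n ` St n" unfolding Kset_def using K_in_Phi by blast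
qed

definition Y0S :: "nat \<Rightarrow> (nat \<Rightarrow> complex) set" where
  "Y0S m = {z. (\<forall>i\<ge>m. z i = 0) \<and> (\<exists>i. z i \<noteq> 0)}"

abbreviation Rc :: "(nat \<Rightarrow> complex) \<Rightarrow> (nat \<Rightarrow> complex) \<Rightarrow> bool" where
  "Rc \<equiv> (\<lambda>z w. \<exists>c. c \<noteq> 0 \<and> w = (\<lambda>i. c * z i))"

lemma Y0_eq: "subtopology (product_topology (\<lambda>_. (euclidean :: complex topology)) UNIV)
        {z. (\<forall>i\<ge>m. z i = 0) \<and> (\<exists>i. z i \<noteq> 0)} = top_of_set (Y0S m)"
  by (simp add: euclidean_product_topology Y0S_def)

lemma complex_proj_eq: "complex_proj m = quotient_top (top_of_set (Y0S m)) Rc"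
  unfolding complex_proj_def Y0_eq ..

lemma equiv_c: "equiv (topspace (top_of_set (Y0S m))) (qrel (top_of_set (Y0S m)) Rc)"
proof (rule equiv_qrelI)
  fix x show "Rc x x" by (rule exI[of _ 1]) simp
next
  fix x y assume "Rc x y"
  then obtain c where c: "c \<noteq> 0" "y = (\<lambda>i. c * x i)" by blast
  then have "x = (\<lambda>i. inverse c * y i)" by (simp add: field_simps)
  moreover have "inverse c \<noteq> 0" using c by simp
  ultimately show "Rc y x" by blast
next
  fix x y z assume "Rc x y" "Rc y z"
  then obtain c d where "c \<noteq> 0" "y = (\<lambda>i. c * x i)" "d \<noteq> 0" "z = (\<lambda>i. d * y i)" by blast
  then have "d * c \<noteq> 0" "z = (\<lambda>i. (d * c) * x i)" by (simp_all add: mult.assoc)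
  then show "Rc x z" by blast
qed

lemma topspace_CP: "topspace (complex_proj m) = Y0S m // qrel (top_of_set (Y0S m)) Rc"
  unfolding complex_proj_eq using topspace_quotient_top[OF equiv_c] by simp

lemma Y0S_empty: "Y0S 0 = {}"
  by (auto simp: Y0S_def)

lemma Y0S_e0: "m > 0 \<Longrightarrow> (\<lambda>i. if i = 0 then 1 else 0) \<in> Y0S m"
  by (auto simp: Y0S_def)

lemma CP_empty: "topspace (complex_proj 0) = {}"
  by (simp add: topspace_CP Y0S_empty)

lemma CP_nonempty: "m > 0 \<Longrightarrow> topspace (complex_proj m) \<noteq> {}"
  using Y0S_e0[of m] by (auto simp: topspace_CP quotient_def)

lemma join_rel_refl: "join_rel p p" by (simp add: join_rel_def)
lemma join_rel_sym: "join_rel p q \<Longrightarrow> join_rel q p" by (auto simp: join_rel_def)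
lemma join_rel_trans: "join_rel p q \<Longrightarrow> join_rel q r \<Longrightarrow> join_rel p r"
  unfolding join_rel_def by (elim disjE) auto

lemma equiv_join: "equiv (topspace X) (qrel X join_rel)"
  by (rule equiv_qrelI) (auto intro: join_rel_refl join_rel_sym join_rel_trans)

definition clsY :: "nat \<Rightarrow> (nat \<Rightarrow> complex) \<Rightarrow> (nat \<Rightarrow> complex) set" where
  "clsY m = clsq (top_of_set (Y0S m)) Rc"

lemma quotient_map_clsY: "quotient_map (top_of_set (Y0S m)) (complex_proj m) (clsY m)"
  unfolding complex_proj_eq clsY_def by (rule quotient_map_clsq[OF equiv_c])

lemma clsY_eq_iff: "z \<in> Y0S m \<Longrightarrow> w \<in> Y0S m \<Longrightarrow> clsY m z = clsY m w \<longleftrightarrow> Rc z w"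
  unfolding clsY_def by (rule clsq_eq_iff[OF equiv_c]) simp_all

lemma locally_compact_interval: "locally_compact_space (top_of_set {0..1::real})"
  by (simp add: compact_imp_locally_compact_space compact_space_subtopology)

definition q0 :: "nat \<Rightarrow> ('a \<times> (nat \<Rightarrow> complex) \<times> real) \<Rightarrow> ('a \<times> (nat \<Rightarrow> complex) set \<times> real)" where
  "q0 m = (\<lambda>(a, p). (a, (\<lambda>(z, t). (clsY m z, t)) p))"

lemma quotient_map_q0:
  assumes "compact_space X" "Hausdorff_space X"
  shows "quotient_map (prod_topology X (prod_topology (top_of_set (Y0S m)) (top_of_set {0..1::real})))
                      (prod_topology X (prod_topology (complex_proj m) (top_of_set {0..1::real}))) (q0 m)"
proof -
  have "quotient_map (prod_topology (top_of_set (Y0S m)) (top_of_set {0..1::real}))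
                     (prod_topology (complex_proj m) (top_of_set {0..1::real})) (\<lambda>(z, t). (clsY m z, t))"
    by (rule quotient_map_prod_left[OF locally_compact_interval _ quotient_map_clsY])
       (simp add: Hausdorff_space_subtopology)
  then have "quotient_map (prod_topology X (prod_topology (top_of_set (Y0S m)) (top_of_set {0..1::real})))
                      (prod_topology X (prod_topology (complex_proj m) (top_of_set {0..1::real})))
                      (\<lambda>(x, y). (x, (\<lambda>(z, t). (clsY m z, t)) y))"
    using quotient_map_prod_right[OF compact_imp_locally_compact_space[OF assms(1)]] assms(2) by blast
  then show ?thesis unfolding q0_def .
qed

definition mm :: "nat \<Rightarrow> nat" where "mm n = (n + 1) div 2 - 1"

lemma mm_le: "mm n \<le> n div 2" unfolding mm_def by presburger
lemma mm_odd: "odd n \<Longrightarrow> mm n = n div 2" unfolding mm_def by presburger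
lemma mm_even: "even n \<Longrightarrow> mm n = n div 2 - 1" unfolding mm_def by presburger

definition ext :: "nat \<Rightarrow> (nat \<Rightarrow> complex) \<Rightarrow> nat \<Rightarrow> complex" where
  "ext n z j = (if j < mm n then z j else if even n \<and> j = mm n then - (\<Sum>i<mm n. z i) else 0)"

definition hatz :: "nat \<Rightarrow> (nat \<Rightarrow> complex) \<Rightarrow> nat \<Rightarrow> complex" where
  "hatz n z j = ext n z j / of_real (nrmC (n div 2) (ext n z))"

definition Psi :: "nat \<Rightarrow> (nat \<Rightarrow> real) \<times> (nat \<Rightarrow> complex) \<times> real \<Rightarrow> (nat \<Rightarrow> real) \<times> (nat \<times> nat \<Rightarrow> complex)" where
  "Psi n p = Hdata n (\<lambda>j. snd (snd p) * fst p j) (\<lambda>j. of_real (1 - snd (snd p)) * hatz n (fst (snd p)) j)"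

definition SXk :: "nat \<Rightarrow> (nat \<Rightarrow> real) set" where
  "SXk k = {x. nrmR k x = 1 \<and> (\<forall>i\<ge>k. x i = 0)}"

lemma nsphere_eq: assumes "k \<ge> 1" shows "nsphere (k - 1) = top_of_set (SXk k)"
proof -
  have a: "{..k-1} = {..<k}" using assms by auto
  have "{x. (\<Sum>i\<le>k-1. x i ^ 2) = 1 \<and> (\<forall>i>k-1. x i = (0::real))} = SXk k"
    unfolding a SXk_def nrmR_def using assms by auto
  then show ?thesis unfolding nsphere by (simp add: euclidean_product_topology)
qed

lemma ext_low: "j < mm n \<Longrightarrow> ext n z j = z j" by (simp add: ext_def)

lemma ext_scale: "ext n (\<lambda>i. c * z i) j = c * ext n z j"
  by (simp add: ext_def sum_distrib_left)

lemma nrmC_cscale: "nrmC k (\<lambda>j. c * e j) = cmod c * nrmC k e"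
  by (simp add: nrmC_def norm_mult power_mult_distrib sum_distrib_left[symmetric] real_sqrt_mult)

lemma ext_pos: assumes "z \<in> Y0S (mm n)" shows "nrmC (n div 2) (ext n z) > 0"
proof -
  obtain i where i: "z i \<noteq> 0" using assms by (auto simp: Y0S_def)
  then have "i < mm n" using assms by (auto simp: Y0S_def) (meson not_le)
  then have "i < n div 2" "ext n z i \<noteq> 0" using mm_le[of n] i by (simp_all add: ext_low)
  then show ?thesis by (rule nrmC_pos)
qed

lemma nrmC_hat: assumes "z \<in> Y0S (mm n)" shows "nrmC (n div 2) (hatz n z) = 1"
proof -
  let ?N = "nrmC (n div 2) (ext n z)"
  have N0: "?N > 0" using ext_pos[OF assms] .
  have h: "hatz n z = (\<lambda>j. of_real (1 / ?N) * ext n z j)" by (simp add: hatz_def fun_eq_iff)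
  have "nrmC (n div 2) (hatz n z) = (1 / ?N) * ?N" unfolding h using N0 by (subst nrmC_scale) simp_all
  then show ?thesis using N0 by simp
qed

lemma hatz_scale:
  assumes "z \<in> Y0S (mm n)" "c \<noteq> 0"
  shows "hatz n (\<lambda>i. c * z i) j = (c / of_real (cmod c)) * hatz n z j"
proof -
  have "ext n (\<lambda>i. c * z i) = (\<lambda>j. c * ext n z j)" by (simp add: fun_eq_iff ext_scale)
  then have "nrmC (n div 2) (ext n (\<lambda>i. c * z i)) = cmod c * nrmC (n div 2) (ext n z)"
    by (simp add: nrmC_cscale)
  then show ?thesis using assms(2) by (simp add: hatz_def ext_scale field_simps)
qed

lemma constr_ext: "constr n (\<lambda>j. a * ext n z j)"
proof -
  have "even n \<Longrightarrow> (\<Sum>j<n div 2. ext n z j) = 0"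
  proof -
    assume e: "even n"
    show "(\<Sum>j<n div 2. ext n z j) = 0"
    proof (cases "n div 2")
      case 0
      then show ?thesis by simp
    next
      case (Suc k)
      then have mk: "mm n = k" using mm_even[OF e] by simp
      have ex: "ext n z j = (if j < k then z j else if even n \<and> j = k then - (\<Sum>i<k. z i) else 0)" for j
        unfolding ext_def mk ..
      have "(\<Sum>j<n div 2. ext n z j) = (\<Sum>j<k. ext n z j) + ext n z k" using Suc by simp
      also have "\<dots> = (\<Sum>j<k. z j) - (\<Sum>j<k. z j)"
        using e by (simp add: ex cong: sum_cong_lt)
      finally show ?thesis by simp
    qed
  qed
  then show ?thesis by (simp add: constr_def sum_distrib_left[symmetric])
qed

lemma Psi_inv_c:
  assumes "z \<in> Y0S (mm n)" "c \<noteq> 0"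
  shows "Psi n (a, (\<lambda>i. c * z i), t) = Psi n (a, z, t)"
  unfolding Psi_def
proof (rule Hdata_unit[of "c / of_real (cmod c)"])
  show "cmod (c / complex_of_real (cmod c)) = 1" using assms(2) by (simp add: norm_divide)
qed (simp_all add: hatz_scale[OF assms] ac_simps)

lemma nrmR_cong: "(\<And>j. j < k \<Longrightarrow> D j = D' j) \<Longrightarrow> nrmR k D = nrmR k D'"
  unfolding nrmR_def by (simp cong: sum_cong_lt)

lemma Psi_char:
  assumes p: "p \<in> SXk (n div 2) \<times> (Y0S (mm n) \<times> {0..1})" and p': "p' \<in> SXk (n div 2) \<times> (Y0S (mm n) \<times> {0..1})"
  shows "Psi n p = Psi n p' \<longleftrightarrow> join_rel (q0 (mm n) p) (q0 (mm n) p')"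
proof -
  let ?k = "n div 2" and ?m = "mm n"
  obtain a z t where pe: "p = (a, z, t)" by (metis prod.collapse)
  obtain b w r where pe': "p' = (b, w, r)" by (metis prod.collapse)
  have a: "nrmR ?k a = 1" "\<forall>i\<ge>?k. a i = 0" and z: "z \<in> Y0S ?m" and t: "0 \<le> t" "t \<le> 1"
    using p by (auto simp: pe SXk_def)
  have b: "nrmR ?k b = 1" "\<forall>i\<ge>?k. b i = 0" and w: "w \<in> Y0S ?m" and r: "0 \<le> r" "r \<le> 1"
    using p' by (auto simp: pe' SXk_def)
  have q0e: "q0 ?m p = (a, clsY ?m z, t)" "q0 ?m p' = (b, clsY ?m w, r)" by (simp_all add: q0_def pe pe')
  show ?thesis
  proof
    assume eq: "Psi n p = Psi n p'"
    have eq': "Hdata n (\<lambda>j. t * a j) (\<lambda>j. of_real (1 - t) * hatz n z j) =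
               Hdata n (\<lambda>j. r * b j) (\<lambda>j. of_real (1 - r) * hatz n w j)"
      using eq unfolding Psi_def pe pe' snd_conv fst_conv .
    have hi: "(\<forall>j<?k. r * b j = t * a j) \<and> (\<exists>u. cmod u = 1 \<and> (\<forall>j<?k. of_real (1 - r) * hatz n w j = u * (of_real (1 - t) * hatz n z j)))"
      by (rule Hdata_inj[OF eq'])
    then obtain u where u1: "cmod u = 1"
        and cu: "\<forall>j<?k. of_real (1 - r) * hatz n w j = u * (of_real (1 - t) * hatz n z j)"
        and du: "\<forall>j<?k. r * b j = t * a j"
      by (elim conjE exE)
    have "nrmR ?k (\<lambda>j. r * b j) = nrmR ?k (\<lambda>j. t * a j)" using du by (intro nrmR_cong) simp
    then have tr: "t = r" using a b t r by (simp add: nrmR_scale)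
    have ab: "a = b" if "t > 0"
    proof
      fix i show "a i = b i"
      proof (cases "i < ?k")
        case True then show ?thesis using du tr that by simp
      next
        case False then show ?thesis using a b by simp
      qed
    qed
    have zw: "clsY ?m z = clsY ?m w" if "t < 1"
    proof -
      let ?Nz = "nrmC ?k (ext n z)" and ?Nw = "nrmC ?k (ext n w)"
      have Nz: "?Nz > 0" using ext_pos[OF z] .
      have Nw: "?Nw > 0" using ext_pos[OF w] .
      have h: "hatz n w j = u * hatz n z j" if "j < ?k" for j
        using cu that tr \<open>t < 1\<close> by simp
      define c where "c = of_real (?Nw / ?Nz) * u"
      have c0: "c \<noteq> 0" using Nz Nw u1 by (auto simp: c_def)
      have "w i = c * z i" for i
      proof (cases "i < ?m")
        case True
        then have "i < ?k" using mm_le[of n] by simp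
        then have "ext n w i / of_real ?Nw = u * (ext n z i / of_real ?Nz)" using h by (simp add: hatz_def)
        then have "ext n w i = c * ext n z i" using Nz Nw by (simp add: c_def field_simps)
        then show ?thesis using True by (simp add: ext_low)
      next
        case False
        then show ?thesis using z w by (simp add: Y0S_def)
      qed
      then have "Rc z w" using c0 by blast
      then show ?thesis using clsY_eq_iff[OF z w] by blast
    qed
    show "join_rel (q0 ?m p) (q0 ?m p')"
      unfolding q0e join_rel_def
    proof (cases "t = 0")
      case True then show "(a, clsY ?m z, t) = (b, clsY ?m w, r) \<or>
          snd (snd (a, clsY ?m z, t)) = 0 \<and> snd (snd (b, clsY ?m w, r)) = 0 \<and> fst (snd (a, clsY ?m z, t)) = fst (snd (b, clsY ?m w, r)) \<or>
          snd (snd (a, clsY ?m z, t)) = 1 \<and> snd (snd (b, clsY ?m w, r)) = 1 \<and> fst (a, clsY ?m z, t) = fst (b, clsY ?m w, r)"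
        using zw tr by simp
    next
      case False
      then have tp: "t > 0" using t by simp
      show "(a, clsY ?m z, t) = (b, clsY ?m w, r) \<or>
          snd (snd (a, clsY ?m z, t)) = 0 \<and> snd (snd (b, clsY ?m w, r)) = 0 \<and> fst (snd (a, clsY ?m z, t)) = fst (snd (b, clsY ?m w, r)) \<or>
          snd (snd (a, clsY ?m z, t)) = 1 \<and> snd (snd (b, clsY ?m w, r)) = 1 \<and> fst (a, clsY ?m z, t) = fst (b, clsY ?m w, r)"
      proof (cases "t = 1")
        case True then show ?thesis using ab[OF tp] tr by simp
      next
        case False then have "t < 1" using t by simp
        then show ?thesis using ab[OF tp] zw tr by simp
      qed
    qed
  next
    assume jr: "join_rel (q0 ?m p) (q0 ?m p')"
    have inv: "Psi n (x, w, s) = Psi n (x, z, s)" if "clsY ?m z = clsY ?m w" for x s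
    proof -
      have "Rc z w" using that clsY_eq_iff[OF z w] by (rule iffD1[rotated])
      then obtain c where c: "c \<noteq> 0" "w = (\<lambda>i. c * z i)" by blast
      show ?thesis unfolding c(2) by (rule Psi_inv_c[OF z c(1)])
    qed
    have jr': "(a = b \<and> clsY ?m z = clsY ?m w \<and> t = r) \<or> (t = 0 \<and> r = 0 \<and> clsY ?m z = clsY ?m w) \<or> (t = 1 \<and> r = 1 \<and> a = b)"
      using jr unfolding q0e join_rel_def prod.inject fst_conv snd_conv .
    then show "Psi n p = Psi n p'"
    proof (elim disjE conjE)
      assume h: "a = b" "clsY ?m z = clsY ?m w" "t = r"
      show ?thesis unfolding pe pe' h(1) h(3) inv[OF h(2)] ..
    next
      assume h: "t = 0" "r = 0" "clsY ?m z = clsY ?m w"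
      have "Psi n p' = Psi n (b, z, 0)" unfolding pe' h(2) inv[OF h(3)] ..
      also have "\<dots> = Psi n p" unfolding pe h(1) Psi_def by simp
      finally show ?thesis by (rule sym)
    next
      assume h: "t = 1" "r = 1" "a = b"
      show ?thesis unfolding pe pe' h Psi_def by simp
    qed
  qed
qed

definition SphC :: "nat \<Rightarrow> (nat \<Rightarrow> complex) set" where
  "SphC m = {z. (\<forall>i\<ge>m. z i = 0) \<and> (\<Sum>i<m. (cmod (z i))^2) = 1}"

lemma SphC_sub: "SphC m \<subseteq> Y0S m"
proof
  fix z assume z: "z \<in> SphC m"
  have "\<exists>i. z i \<noteq> 0"
  proof (rule ccontr)
    assume "\<not> ?thesis" then have "\<forall>i. z i = 0" by blast
    then show False using z by (simp add: SphC_def)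
  qed
  then show "z \<in> Y0S m" using z by (simp add: SphC_def Y0S_def)
qed

lemma compact_cubeC: "compact (PiE UNIV (\<lambda>i::nat. cball (0::complex) 1))"
proof -
  have "compactin (product_topology (\<lambda>i. euclidean) UNIV) (PiE UNIV (\<lambda>i::nat. cball (0::complex) 1))"
    by (simp add: compactin_PiE)
  then show ?thesis by (simp add: euclidean_product_topology)
qed

lemma cont_coordU: "continuous_on S (\<lambda>x::nat \<Rightarrow> 'a::topological_space. x i)"
  by (rule continuous_on_subset[OF continuous_on_product_coordinates]) simp

lemma compact_SphC: "compact (SphC m)"
proof -
  have cl: "closed (SphC m)"
  proof -
    have "SphC m = (\<Inter>i\<in>{m..}. {z. z i = 0}) \<inter> {z. (\<Sum>i<m. (cmod (z i))^2) = 1}"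
      by (auto simp: SphC_def)
    moreover have "closed {z::nat\<Rightarrow>complex. z i = 0}" for i
      by (intro closed_Collect_eq cont_coordU continuous_on_const)
    moreover have "closed {z::nat\<Rightarrow>complex. (\<Sum>i<m. (cmod (z i))^2) = 1}"
      by (intro closed_Collect_eq continuous_on_sum continuous_on_power continuous_on_norm cont_coordU continuous_on_const)
    ultimately show ?thesis by (simp add: closed_INT closed_Int)
  qed
  have sub: "SphC m \<subseteq> PiE UNIV (\<lambda>i::nat. cball (0::complex) 1)"
  proof
    fix z assume z: "z \<in> SphC m"
    have "cmod (z i) \<le> 1" for i
    proof (cases "i < m")
      case True
      have "(cmod (z i))^2 \<le> (\<Sum>i<m. (cmod (z i))^2)" using True by (intro member_le_sum) auto
      then have "(cmod (z i))^2 \<le> 1" using z by (simp add: SphC_def)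
      then show ?thesis by (simp add: abs_square_le_1)
    next
      case False then show ?thesis using z by (simp add: SphC_def)
    qed
    then show "z \<in> PiE UNIV (\<lambda>i::nat. cball (0::complex) 1)" by auto
  qed
  have "compact (PiE UNIV (\<lambda>i::nat. cball (0::complex) 1) \<inter> SphC m)"
    using compact_cubeC cl compact_Int_closed by blast
  then show ?thesis using sub by (metis inf.absorb_iff2)
qed

lemma compact_SXk: "compact (SXk k)"
proof -
  have cl: "closed (SXk k)"
  proof -
    have "SXk k = (\<Inter>i\<in>{k..}. {z. z i = 0}) \<inter> {z. nrmR k z = 1}"
      by (auto simp: SXk_def)
    moreover have "closed {z::nat\<Rightarrow>real. z i = 0}" for i
      by (intro closed_Collect_eq cont_coordU continuous_on_const)
    moreover have "closed {z::nat\<Rightarrow>real. nrmR k z = 1}"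
      unfolding nrmR_def
      by (intro closed_Collect_eq continuous_on_real_sqrt continuous_on_sum continuous_on_power cont_coordU continuous_on_const)
    ultimately show ?thesis by (simp add: closed_INT closed_Int)
  qed
  have sub: "SXk k \<subseteq> PiE UNIV (\<lambda>i::nat. {-1..1::real})"
  proof
    fix z assume z: "z \<in> SXk k"
    have "\<bar>z i\<bar> \<le> 1" for i
    proof (cases "i < k")
      case True
      have "(z i)^2 \<le> (\<Sum>i<k. (z i)^2)" using True by (intro member_le_sum) auto
      moreover have "(\<Sum>i<k. (z i)^2) = 1" using z by (simp add: SXk_def nrmR_def)
      ultimately show ?thesis by (simp add: abs_square_le_1)
    next
      case False then show ?thesis using z by (simp add: SXk_def)
    qed
    then show "z \<in> PiE UNIV (\<lambda>i::nat. {-1..1::real})" by (auto simp: abs_le_iff)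
  qed
  have "compact (PiE UNIV (\<lambda>i::nat. {-1..1::real}) \<inter> SXk k)"
    using compact_cube cl compact_Int_closed by blast
  then show ?thesis using sub by (metis inf.absorb_iff2)
qed

lemma cont_fst_i: "continuous_on S (\<lambda>p. fst p i :: 'b::topological_space)"
  by (rule continuous_on_product_then_coordinatewise[OF continuous_on_fst[OF continuous_on_id]])

lemma cont_fst_snd_i: "continuous_on S (\<lambda>p. fst (snd p) i :: 'b::topological_space)"
  by (rule continuous_on_product_then_coordinatewise[OF continuous_on_fst[OF continuous_on_snd[OF continuous_on_id]]])

lemma ext_cont:
  assumes "\<And>i. continuous_on S (\<lambda>p. g p i)"
  shows "continuous_on S (\<lambda>p. ext n (g p) j)"
proof (cases "j < mm n")
  case True
  then have e: "(\<lambda>p. ext n (g p) j) = (\<lambda>p. g p j)" by (simp add: ext_def fun_eq_iff)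
  show ?thesis by (subst e) (rule assms)
next
  case False
  show ?thesis
  proof (cases "even n \<and> j = mm n")
    case True
    then have e: "(\<lambda>p. ext n (g p) j) = (\<lambda>p. - (\<Sum>i<mm n. g p i))" using False by (simp add: ext_def fun_eq_iff)
    show ?thesis by (subst e) (intro continuous_on_minus continuous_on_sum assms)
  next
    case False2: False
    then have e: "(\<lambda>p. ext n (g p) j) = (\<lambda>p. 0)" using False by (auto simp: ext_def fun_eq_iff)
    show ?thesis by (subst e) (rule continuous_on_const)
  qed
qed

lemma Psi_cont: "continuous_on (SXk (n div 2) \<times> (Y0S (mm n) \<times> {0..1})) (Psi n)"
proof -
  let ?S = "SXk (n div 2) \<times> (Y0S (mm n) \<times> {0..1::real})"
  have ec: "continuous_on ?S (\<lambda>p. ext n (fst (snd p)) j)" for j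
    by (rule ext_cont) (rule cont_fst_snd_i)
  have nc: "continuous_on ?S (\<lambda>p. nrmC (n div 2) (ext n (fst (snd p))))"
    unfolding nrmC_def by (intro continuous_on_real_sqrt continuous_on_sum continuous_on_power continuous_on_norm ec)
  have nz: "\<forall>p\<in>?S. complex_of_real (nrmC (n div 2) (ext n (fst (snd p)))) \<noteq> 0"
    using ext_pos by fastforce
  have tc: "continuous_on ?S (\<lambda>p. snd (snd p))" by (intro continuous_on_snd continuous_on_id)
  have "continuous_on ?S (\<lambda>p. Hdata n (\<lambda>j. snd (snd p) * fst p j) (\<lambda>j. of_real (1 - snd (snd p)) * hatz n (fst (snd p)) j))"
  proof (rule Hdata_cont)
    fix j
    show "continuous_on ?S (\<lambda>p. snd (snd p) * fst p j)" by (intro continuous_on_mult tc cont_fst_i)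
    show "continuous_on ?S (\<lambda>p. of_real (1 - snd (snd p)) * hatz n (fst (snd p)) j)"
      unfolding hatz_def
      by (intro continuous_on_mult continuous_on_of_real continuous_on_diff continuous_on_const tc
          continuous_on_divide ec nc nz)
  qed
  then show ?thesis unfolding Psi_def[abs_def] .
qed

lemma nrmC_cong: "(\<And>j. j < k \<Longrightarrow> c j = c' j) \<Longrightarrow> nrmC k c = nrmC k c'"
  unfolding nrmC_def by (simp cong: sum_cong_lt)

lemma Psi_in_K:
  assumes p: "p \<in> SXk (n div 2) \<times> (Y0S (mm n) \<times> {0..1})"
  shows "Psi n p \<in> Kset n"
proof -
  obtain a z t where pe: "p = (a, z, t)" by (metis prod.collapse)
  have a: "nrmR (n div 2) a = 1" and z: "z \<in> Y0S (mm n)" and t: "0 \<le> t" "t \<le> 1"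
    using p by (auto simp: pe SXk_def)
  let ?N = "nrmC (n div 2) (ext n z)"
  have N0: "?N > 0" using ext_pos[OF z] .
  have ceq: "(\<lambda>j. of_real (1 - t) * hatz n z j) = (\<lambda>j. (of_real (1 - t) / of_real ?N) * ext n z j)"
    by (simp add: hatz_def fun_eq_iff)
  have "constr n (\<lambda>j. of_real (1 - t) * hatz n z j)" unfolding ceq by (rule constr_ext)
  moreover have "rho n (\<lambda>j. t * a j) (\<lambda>j. of_real (1 - t) * hatz n z j) = 1"
  proof -
    have r1: "nrmR (n div 2) (\<lambda>j. t * a j) = t" by (subst nrmR_scale) (simp_all add: t a)
    have r2: "nrmC (n div 2) (\<lambda>j. of_real (1 - t) * hatz n z j) = 1 - t"
      by (subst nrmC_scale) (simp_all add: t nrmC_hat[OF z])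
    show ?thesis unfolding rho_def r1 r2 by simp
  qed
  ultimately show ?thesis unfolding Kset_def pe Psi_def by auto
qed

lemma K_in_Psi:
  assumes m0: "mm n > 0" and con: "constr n c" and r1: "rho n D c = 1"
  shows "Hdata n D c \<in> Psi n ` (SXk (n div 2) \<times> (Y0S (mm n) \<times> {0..1}))"
proof -
  let ?k = "n div 2" and ?m = "mm n"
  have k0: "?k > 0" using m0 mm_le[of n] by linarith
  define \<alpha> where "\<alpha> = nrmR ?k D"
  define \<beta> where "\<beta> = nrmC ?k c"
  have ab: "\<alpha> + \<beta> = 1" using r1 by (simp add: rho_def \<alpha>_def \<beta>_def)
  have a0: "\<alpha> \<ge> 0" "\<beta> \<ge> 0" by (simp_all add: \<alpha>_def \<beta>_def nrmR_nonneg nrmC_nonneg)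
  define e0r where "e0r = (\<lambda>i::nat. if i = 0 then 1 else (0::real))"
  define e0c where "e0c = (\<lambda>i::nat. if i = 0 then 1 else (0::complex))"
  define a where "a = (if \<alpha> > 0 then (\<lambda>j. if j < ?k then D j / \<alpha> else 0) else e0r)"
  define z where "z = (if \<beta> > 0 then (\<lambda>i. if i < ?m then c i else 0) else e0c)"
  have Dz: "D j = 0" if "\<alpha> = 0" "j < ?k" for j
    using nrmR_pos[of j ?k D] that by (auto simp: \<alpha>_def)
  have cz0: "c j = 0" if "\<beta> = 0" "j < ?k" for j
    using nrmC_pos[of j ?k c] that by (auto simp: \<beta>_def)
  have aS: "a \<in> SXk ?k"
  proof (cases "\<alpha> > 0")
    case True
    have "nrmR ?k a = nrmR ?k (\<lambda>j. (1 / \<alpha>) * D j)" using True by (intro nrmR_cong) (simp add: a_def)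
    also have "\<dots> = (1 / \<alpha>) * \<alpha>" using True by (subst nrmR_scale) (simp_all add: \<alpha>_def)
    also have "\<dots> = 1" using True by simp
    finally show ?thesis using True by (simp add: SXk_def a_def)
  next
    case False
    have sq: "(\<lambda>j. (e0r j)^2) = (\<lambda>j. if j = 0 then 1 else 0)" by (auto simp: e0r_def fun_eq_iff)
    have "nrmR ?k e0r = sqrt (\<Sum>j<?k. (if j = 0 then 1 else 0))"
      unfolding nrmR_def sq ..
    also have "\<dots> = 1" using k0 by (simp add: sum.delta)
    finally show ?thesis using False k0 by (auto simp: SXk_def a_def e0r_def)
  qed
  have ext_c: "ext n z j = c j" if "\<beta> > 0" "j < ?k" for j
  proof (cases "j < ?m")
    case True then show ?thesis using that by (simp add: ext_low z_def)
  next
    case False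
    have e: "even n" and jm: "j = ?m" using False that(2) mm_odd[of n] mm_even[of n] by (cases "even n"; simp)+
    then have k: "?k = Suc ?m" using mm_even[OF e] k0 by simp
    have "(\<Sum>i<?k. c i) = 0" using con e by (simp add: constr_def)
    then have "c ?m = - (\<Sum>i<?m. c i)" unfolding k by (simp add: eq_neg_iff_add_eq_0 add.commute)
    then show ?thesis using e jm that(1) by (simp add: ext_def z_def cong: sum_cong_lt)
  qed
  have zS: "z \<in> Y0S ?m"
  proof (cases "\<beta> > 0")
    case True
    obtain j where j: "j < ?k" "c j \<noteq> 0"
    proof (rule ccontr)
      assume "\<not> thesis"
      then have "\<forall>j<?k. c j = 0" using that by blast
      then have "\<beta> = 0" by (simp add: \<beta>_def nrmC_def cong: sum_cong_lt)
      then show False using True by simp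
    qed
    have "\<exists>i. z i \<noteq> 0"
    proof (rule ccontr)
      assume "\<not> ?thesis"
      then have "\<forall>i. z i = 0" by blast
      then have "ext n z j = 0" by (simp add: ext_def)
      then show False using ext_c[OF True j(1)] j(2) by simp
    qed
    then show ?thesis using True by (simp add: Y0S_def z_def)
  next
    case False then show ?thesis using m0 by (auto simp: Y0S_def z_def e0c_def)
  qed
  define p where "p = (a, z, \<alpha>)"
  have pS: "p \<in> SXk ?k \<times> (Y0S ?m \<times> {0..1})" using aS zS a0 ab by (simp add: p_def)
  have "Psi n p = Hdata n D c"
    unfolding Psi_def p_def snd_conv fst_conv
  proof (rule Hdata_cong)
    fix j assume j: "j < ?k"
    show "\<alpha> * a j = D j"
    proof (cases "\<alpha> > 0")
      case True then show ?thesis using j by (simp add: a_def)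
    next
      case False then have "\<alpha> = 0" using a0 by simp
      then show ?thesis using j Dz by simp
    qed
    show "of_real (1 - \<alpha>) * hatz n z j = c j"
    proof (cases "\<beta> > 0")
      case True
      have "nrmC ?k (ext n z) = \<beta>" unfolding \<beta>_def by (intro nrmC_cong) (simp add: ext_c[OF True])
      then have "hatz n z j = c j / of_real \<beta>" by (simp add: hatz_def ext_c[OF True j])
      moreover have "1 - \<alpha> = \<beta>" using ab by simp
      ultimately show ?thesis using True by simp
    next
      case False
      then have "\<beta> = 0" using a0 by simp
      then show ?thesis using ab cz0 j by simp
    qed
  qed
  then show ?thesis using pS by (metis image_eqI)
qed

lemma Hausdorff_fun_real: "Hausdorff_space (euclidean :: (nat \<Rightarrow> real) topology)"
proof -
  have "Hausdorff_space (product_topology (\<lambda>i::nat. euclidean :: real topology) UNIV)"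
    by (simp add: Hausdorff_space_product_topology)
  then show ?thesis by (simp only: euclidean_product_topology)
qed

lemma Psi_image: "mm n > 0 \<Longrightarrow> Psi n ` (SXk (n div 2) \<times> (Y0S (mm n) \<times> {0..1})) = Kset n"
proof
  show "Psi n ` (SXk (n div 2) \<times> (Y0S (mm n) \<times> {0..1})) \<subseteq> Kset n" using Psi_in_K by blast
  assume "mm n > 0"
  then show "Kset n \<subseteq> Psi n ` (SXk (n div 2) \<times> (Y0S (mm n) \<times> {0..1}))"
    unfolding Kset_def using K_in_Psi by blast
qed

lemma join_homeo_pos:
  assumes n2: "n \<ge> 2" and m0: "mm n > 0"
  shows "join_top (nsphere (n div 2 - 1)) (complex_proj (mm n)) homeomorphic_space top_of_set (Kset n)"
proof -
  let ?k = "n div 2" and ?m = "mm n"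
  let ?X = "top_of_set (SXk ?k)" and ?CP = "complex_proj ?m" and ?II = "top_of_set {0..1::real}"
  let ?T = "prod_topology ?X (prod_topology ?CP ?II)"
  let ?R = "prod_topology ?X (prod_topology (top_of_set (Y0S ?m)) ?II)"
  let ?S = "SXk ?k \<times> (Y0S ?m \<times> {0..1::real})"
  have k1: "?k \<ge> 1" using n2 by simp
  have Xe: "nsphere (?k - 1) = ?X" by (rule nsphere_eq[OF k1])
  have J: "join_top (nsphere (?k - 1)) ?CP = quotient_top ?T join_rel"
    unfolding join_top_def Xe using CP_nonempty[OF m0] by simp
  have cX: "compact_space ?X" by (simp add: compact_space_subtopology compact_SXk)
  have hX: "Hausdorff_space ?X" by (simp add: Hausdorff_space_subtopology Hausdorff_fun_real)
  have qm0: "quotient_map ?R ?T (q0 ?m)" by (rule quotient_map_q0[OF cX hX])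
  have qJ: "quotient_map ?R (quotient_top ?T join_rel) (clsq ?T join_rel \<circ> q0 ?m)"
    by (rule quotient_map_compose[OF qm0 quotient_map_clsq[OF equiv_join]])
  have Re: "?R = top_of_set ?S" by simp
  have tR: "topspace ?R = ?S" by simp
  have q0im: "q0 ?m x \<in> topspace ?T" if "x \<in> topspace ?R" for x
    using qm0 that unfolding quotient_map_def by blast
  have "quotient_top ?T join_rel homeomorphic_space subtopology euclidean (Psi n ` topspace ?R)"
  proof (rule main_gen[OF qJ _ Hausdorff_H])
    show "continuous_map ?R euclidean (Psi n)" unfolding Re continuous_map_iff_continuous by (rule Psi_cont)
  next
    fix x y assume x: "x \<in> topspace ?R" and y: "y \<in> topspace ?R"
    have "(clsq ?T join_rel \<circ> q0 ?m) x = (clsq ?T join_rel \<circ> q0 ?m) y \<longleftrightarrow> join_rel (q0 ?m x) (q0 ?m y)"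
      unfolding o_def by (rule clsq_eq_iff[OF equiv_join q0im[OF x] q0im[OF y]])
    also have "\<dots> \<longleftrightarrow> Psi n x = Psi n y" using Psi_char x y tR by simp
    finally show "Psi n x = Psi n y \<longleftrightarrow> (clsq ?T join_rel \<circ> q0 ?m) x = (clsq ?T join_rel \<circ> q0 ?m) y" by simp
  next
    let ?K = "SXk ?k \<times> (SphC ?m \<times> {0..1::real})"
    have Ksub: "?K \<subseteq> ?S" using SphC_sub by auto
    show "compactin ?R ?K" unfolding Re compactin_subtopology
      using Ksub by (simp add: compact_Times compact_SXk compact_SphC)
    have surj: "(clsq ?T join_rel \<circ> q0 ?m) ` topspace ?R = topspace (quotient_top ?T join_rel)"
      using qJ unfolding quotient_map_def by (rule conjunct1)
    show "(clsq ?T join_rel \<circ> q0 ?m) ` ?K = topspace (quotient_top ?T join_rel)"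
    proof
      show "(clsq ?T join_rel \<circ> q0 ?m) ` ?K \<subseteq> topspace (quotient_top ?T join_rel)"
        using surj Ksub tR by blast
      show "topspace (quotient_top ?T join_rel) \<subseteq> (clsq ?T join_rel \<circ> q0 ?m) ` ?K"
      proof
        fix y assume yin: "y \<in> topspace (quotient_top ?T join_rel)"
        have "y \<in> (clsq ?T join_rel \<circ> q0 ?m) ` ?S" using yin unfolding surj[symmetric] tR .
        then obtain x where x: "x \<in> ?S" "y = (clsq ?T join_rel \<circ> q0 ?m) x" by (rule imageE) (rule that)
        obtain a z t where xe: "x = (a, z, t)" by (metis prod.collapse)
        have z: "z \<in> Y0S ?m" using x xe by simp
        define \<nu> where "\<nu> = sqrt (\<Sum>i<?m. (cmod (z i))^2)"
        obtain i where i: "z i \<noteq> 0" using z by (auto simp: Y0S_def)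
        then have im: "i < ?m" using z by (auto simp: Y0S_def) (meson not_le)
        have "0 < (cmod (z i))^2" using i by simp
        also have "\<dots> \<le> (\<Sum>i<?m. (cmod (z i))^2)" using im by (intro member_le_sum) auto
        finally have \<nu>0: "\<nu> > 0" by (simp add: \<nu>_def)
        define z' where "z' = (\<lambda>i. complex_of_real (1 / \<nu>) * z i)"
        have "(\<Sum>i<?m. (cmod (z' i))^2) = (\<Sum>i<?m. (1/\<nu>)^2 * (cmod (z i))^2)"
          using \<nu>0 by (intro sum.cong) (simp_all add: z'_def norm_divide power_divide)
        also have "\<dots> = (1/\<nu>)^2 * \<nu>^2" using \<nu>0 by (simp add: sum_distrib_left[symmetric] \<nu>_def sum_nonneg)
        also have "\<dots> = 1" using \<nu>0 by (simp add: power_divide)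
        finally have z'S: "z' \<in> SphC ?m" using z by (simp add: SphC_def z'_def Y0S_def)
        have "Rc z z'" using \<nu>0 by (intro exI[of _ "complex_of_real (1 / \<nu>)"]) (simp add: z'_def)
        then have ce: "clsY ?m z' = clsY ?m z" using clsY_eq_iff[OF z SphC_sub[THEN subsetD, OF z'S]] by simp
        have "(a, z', t) \<in> ?K" using x xe z'S by simp
        moreover have "y = (clsq ?T join_rel \<circ> q0 ?m) (a, z', t)" using x(2) xe ce by (simp add: q0_def)
        ultimately show "y \<in> (clsq ?T join_rel \<circ> q0 ?m) ` ?K" by blast
      qed
    qed
  qed
  then show ?thesis unfolding J[symmetric] tR Psi_image[OF m0] Xe .
qed

lemma join_homeo_zero:
  assumes n2: "n = 2"
  shows "join_top (nsphere (n div 2 - 1)) (complex_proj (mm n)) homeomorphic_space top_of_set (Kset n)"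
proof -
  have m0: "mm n = 0" using n2 by (simp add: mm_def)
  have k1: "n div 2 = 1" using n2 by simp
  let ?X = "top_of_set (SXk 1)"
  let ?D = "discrete_topology {undefined :: (nat \<Rightarrow> complex) set}"
  let ?R = "prod_topology ?X (prod_topology ?D (top_of_set {1::real}))"
  have Xe: "nsphere (n div 2 - 1) = ?X" using nsphere_eq[of 1] k1 by simp
  have J: "join_top (nsphere (n div 2 - 1)) (complex_proj (mm n)) = quotient_top ?R join_rel"
    unfolding join_top_def Xe m0 using CP_empty by simp
  define F where "F = (\<lambda>p::(nat \<Rightarrow> real) \<times> (nat \<Rightarrow> complex) set \<times> real. Hdata n (fst p) (\<lambda>_. 0))"
  have tR: "topspace ?R = SXk 1 \<times> ({undefined} \<times> {1})" by simp
  have "quotient_top ?R join_rel homeomorphic_space subtopology euclidean (F ` topspace ?R)"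
  proof (rule main_gen[OF quotient_map_clsq[OF equiv_join] _ Hausdorff_H])
    have c1: "continuous_map ?R ?X fst" by (rule continuous_map_fst)
    have "continuous_on (SXk 1) (\<lambda>a. Hdata n a (\<lambda>_. 0))"
      by (rule Hdata_cont) (simp_all add: cont_coordU)
    then have c2: "continuous_map ?X euclidean (\<lambda>a. Hdata n a (\<lambda>_. 0))" by simp
    show "continuous_map ?R euclidean F"
      using continuous_map_compose[OF c1 c2] by (simp add: F_def o_def)
  next
    fix x y assume x: "x \<in> topspace ?R" and y: "y \<in> topspace ?R"
    obtain a where xe: "x = (a, undefined, 1)" and a: "a \<in> SXk 1" using x tR by auto
    obtain b where ye: "y = (b, undefined, 1)" and b: "b \<in> SXk 1" using y tR by auto
    have "F x = F y \<longleftrightarrow> a = b"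
    proof
      assume "F x = F y"
      then have "Hdata n a (\<lambda>_. 0) = Hdata n b (\<lambda>_. 0)" by (simp add: F_def xe ye)
      then have "a 0 = b 0" using Hdata_inj[of n a "\<lambda>_. 0" b "\<lambda>_. 0"] k1 by simp
      moreover have "\<forall>i\<ge>1. a i = 0" "\<forall>i\<ge>1. b i = 0" using a b by (simp_all add: SXk_def)
      ultimately show "a = b" by (metis less_one not_le ext)
    qed (simp add: F_def xe ye)
    also have "\<dots> \<longleftrightarrow> join_rel x y" by (auto simp: xe ye join_rel_def)
    also have "\<dots> \<longleftrightarrow> clsq ?R join_rel x = clsq ?R join_rel y"
      by (rule clsq_eq_iff[OF equiv_join x y, symmetric])
    finally show "F x = F y \<longleftrightarrow> clsq ?R join_rel x = clsq ?R join_rel y" .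
  next
    have "compact_space ?R"
      by (simp add: compact_space_prod_topology compact_space_subtopology compact_SXk compact_space_discrete_topology)
    then show "compactin ?R (topspace ?R)" by (simp add: compact_space_def)
    show "clsq ?R join_rel ` topspace ?R = topspace (quotient_top ?R join_rel)"
      using quotient_map_clsq[OF equiv_join, of ?R] unfolding quotient_map_def by (rule conjunct1)
  qed
  moreover have "F ` topspace ?R = Kset n"
  proof
    show "F ` topspace ?R \<subseteq> Kset n"
    proof
      fix y assume "y \<in> F ` topspace ?R"
      then obtain a where a: "a \<in> SXk 1" "y = Hdata n a (\<lambda>_. 0)" using tR by (auto simp: F_def)
      have "constr n (\<lambda>_. 0)" by (simp add: constr_def)
      moreover have "rho n a (\<lambda>_. 0) = 1" using a k1 by (simp add: rho_def nrmC_def SXk_def)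
      ultimately show "y \<in> Kset n" using a by (auto simp: Kset_def)
    qed
    show "Kset n \<subseteq> F ` topspace ?R"
    proof
      fix y assume "y \<in> Kset n"
      then obtain D c where y: "y = Hdata n D c" and con: "constr n c" and r: "rho n D c = 1"
        by (auto simp: Kset_def)
      have c0: "c 0 = 0" using con n2 by (simp add: constr_def)
      have "nrmC 1 c = 0" using c0 by (simp add: nrmC_def)
      then have D1: "nrmR 1 D = 1" using r k1 by (simp add: rho_def)
      define a where "a = (\<lambda>i. if i < 1 then D i else 0)"
      have "nrmR 1 a = 1" using D1 by (simp add: a_def nrmR_def)
      then have aS: "a \<in> SXk 1" by (simp add: SXk_def a_def)
      have "Hdata n a (\<lambda>_. 0) = Hdata n D c" using k1 c0 by (intro Hdata_cong) (simp_all add: a_def)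
      then have "y = F (a, undefined, 1)" using y by (simp add: F_def)
      moreover have "(a, undefined, 1) \<in> topspace ?R" using aS tR by simp
      ultimately show "y \<in> F ` topspace ?R" by blast
    qed
  qed
  ultimately show ?thesis unfolding J by simp
qed

theorem theorem1p1:
  fixes n :: nat
  assumes "n \<ge> 2"
  shows "grass2_mod_torus n homeomorphic_space
           join_top (nsphere (n div 2 - 1)) (complex_proj ((n + 1) div 2 - 1))"
proof -
  have m: "(n + 1) div 2 - 1 = mm n" by (simp add: mm_def)
  have g: "grass2_mod_torus n homeomorphic_space top_of_set (Kset n)"
    using GT_homeo[of n] unfolding Phi_image .
  have j: "join_top (nsphere (n div 2 - 1)) (complex_proj (mm n)) homeomorphic_space top_of_set (Kset n)"
  proof (cases "mm n > 0")
    case True then show ?thesis by (rule join_homeo_pos[OF assms])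
  next
    case False
    then have "n = 2" using assms by (simp add: mm_def)
    then show ?thesis by (rule join_homeo_zero)
  qed
  show ?thesis unfolding m
    using homeomorphic_space_trans[OF g j[unfolded homeomorphic_space_sym[of _ "top_of_set (Kset n)"]]] .
qed

end
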